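(* The function $f$ maps $]0,\infty[$ into $]0,\infty[$ and has the properties (i) $f(1)=1$; (ii) $\log(1/f)$ is convex on $]0,\infty[$; (iii) $f(s)=f(s+1)-1/f(s+1)$ for all $s>0$. Conversely, if $\tilde f:]0,\infty[\to]0,\infty[$ satisfies (i)–(iii) (with $f$ replaced by $\tilde f$), then $\tilde f=f$ on $]0,\infty[$, and for $0<s\le1$ $$\tilde f(s)=\lim_{n\to\infty}\psi^{\circ n}\!\left(\frac{1}{m_{n-1}}\left(\frac{m_{n-1}}{m_n}\right)^{s}\right),$$ where $\psi(z)=z-1/z$ and $\psi^{\circ n}$ denotes the $n$-fold composition. In particular this limit formula holds for $f$.
   Context: Let $(m_n)_{n\ge0}$ be the unique sequence of positive reals with $m_0=1$ and $(1+m_1+\cdots+m_n)\,m_n=1$ for $n\ge1$. It is a Hausdorff moment sequence: let $\mu$ be the unique probability measure on $[0,1]$ with $\int_0^1 t^n\,d\mu(t)=m_n$ for all $n\ge0$. For real $s>0$ let $f(s)=\int_0^1\frac{1-t^s}{1-t}\,d\mu(t)$ (integrand equal to $s$ at $t=1$ and to $1$ at $t=0$). *)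

theory Defs
  imports "HOL-Probability.Probability"
begin

definition mseq :: "nat \<Rightarrow> real" where
  "mseq = (THE m. m 0 = 1 \<and> (\<forall>n. m n > 0) \<and>
                 (\<forall>n\<ge>1. (1 + (\<Sum>k=1..n. m k)) * m n = 1))"

definition moment_measure :: "real measure \<Rightarrow> bool" where
  "moment_measure M \<longleftrightarrow> prob_space M \<and> sets M = sets borel \<and>
     emeasure M {0..1} = 1 \<and>
     (\<forall>n. integrable M (\<lambda>t. t ^ n) \<and> (\<integral>t. t ^ n \<partial>M) = mseq n)"

text \<open>Integrand (1 - t^s)/(1 - t), with value s at t = 1 (and 1 at t = 0, since 0 powr s = 0).\<close>
definition kern :: "real \<Rightarrow> real \<Rightarrow> real" where
  "kern s t = (if t = 1 then s else (1 - t powr s) / (1 - t))"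

definition ffun :: "real measure \<Rightarrow> real \<Rightarrow> real" where
  "ffun M s = (\<integral>t. kern s t \<partial>M)"

definition psi :: "real \<Rightarrow> real" where
  "psi z = z - 1 / z"

end

theory Submission
  imports Defs "HOL-Complex_Analysis.Complex_Analysis"
begin

fun Tq :: "nat \<Rightarrow> real" where
  "Tq 0 = 1"
| "Tq (Suc n) = (Tq n + sqrt (Tq n ^ 2 + 4)) / 2"

lemma Tq_ge1: "Tq n \<ge> 1"
proof (induction n)
  case (Suc n)
  have "sqrt (Tq n ^ 2 + 4) \<ge> sqrt (Tq n ^ 2)" by (rule real_sqrt_le_mono) simp
  moreover have "sqrt (Tq n ^ 2) = Tq n" using Suc by simp
  ultimately have "sqrt (Tq n ^ 2 + 4) \<ge> Tq n" by simp
  then show ?case using Suc by simp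
qed simp

lemma Tq_pos: "Tq n > 0" using Tq_ge1[of n] by simp

declare Tq.simps(2)[simp del]

lemma Tq_rec: "Tq (Suc n) - 1 / Tq (Suc n) = Tq n"
proof -
  define x where "x = Tq n"
  define r where "r = sqrt (x^2 + 4)"
  have r2: "r^2 = x^2 + 4" unfolding r_def by simp
  have y: "Tq (Suc n) = (x + r)/2" by (simp add: x_def r_def Tq.simps(2))
  have "((x + r)/2)^2 = x * ((x+r)/2) + 1"
    using r2 by (simp add: power2_eq_square field_simps)
  moreover have "(x+r)/2 > 0" using Tq_pos[of "Suc n"] y by simp
  ultimately have h: "(x + r)/2 - 1/((x+r)/2) = x"
    by (simp add: field_simps power2_eq_square)
  have "Tq (Suc n) - 1/Tq (Suc n) = (x + r)/2 - 1/((x+r)/2)" unfolding y by (rule refl)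
  also have "\<dots> = x" by (rule h)
  finally show ?thesis unfolding x_def .
qed

lemma Tq_Suc: "Tq (Suc n) = Tq n + 1 / Tq (Suc n)"
  using Tq_rec[of n] by simp

lemma invdiff_inj:
  fixes y z :: real
  assumes "y > 0" "z > 0" "y - 1/y = z - 1/z"
  shows "y = z"
proof (rule ccontr)
  assume "y \<noteq> z"
  then consider "y < z" | "z < y" by linarith
  then show False
  proof cases
    case 1
    then have "1/z < 1/y" using assms by (simp add: frac_less2)
    then show ?thesis using 1 assms by linarith
  next
    case 2
    then have "1/y < 1/z" using assms by (simp add: frac_less2)
    then show ?thesis using 2 assms by linarith
  qed
qed

lemma Tq_sum: "1 + (\<Sum>k=1..n. 1 / Tq k) = Tq n"
proof (induction n)
  case (Suc n)
  then show ?case using Tq_Suc[of n] by simp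
qed simp

lemma mseq_eq: "mseq = (\<lambda>n. 1 / Tq n)"
proof -
  define P where "P = (\<lambda>m::nat\<Rightarrow>real. m 0 = 1 \<and> (\<forall>n. m n > 0) \<and>
                 (\<forall>n\<ge>1. (1 + (\<Sum>k=1..n. m k)) * m n = 1))"
  have nz: "Tq n \<noteq> 0" for n using Tq_pos[of n] by simp
  have P1: "P (\<lambda>n. 1 / Tq n)"
    unfolding P_def using nz using Tq_sum Tq_pos by (simp add: field_simps)
  have P2: "m = (\<lambda>n. 1 / Tq n)" if "P m" for m
  proof
    fix n
    show "m n = 1 / Tq n"
    proof (induction n rule: less_induct)
      case (less n)
      show ?case
      proof (cases n)
        case 0 then show ?thesis using \<open>P m\<close> unfolding P_def by simp
      next
        case (Suc j)
        have S: "1 + (\<Sum>k=1..j. m k) = Tq j"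
        proof -
          have "(\<Sum>k=1..j. m k) = (\<Sum>k=1..j. 1 / Tq k)"
            by (rule sum.cong) (use less Suc in auto)
          then show ?thesis using Tq_sum[of j] by simp
        qed
        have "(1 + (\<Sum>k=1..Suc j. m k)) * m (Suc j) = 1"
          using \<open>P m\<close> unfolding P_def by auto
        moreover have "1 + (\<Sum>k=1..Suc j. m k) = Tq j + m (Suc j)" using S by simp
        ultimately have e: "(Tq j + m (Suc j)) * m (Suc j) = 1" by metis
        have mp: "m (Suc j) > 0" using \<open>P m\<close> unfolding P_def by auto
        have "1 / m (Suc j) - 1 / (1 / m (Suc j)) = Tq j"
          using e mp by (simp add: field_simps)
        also have "\<dots> = Tq (Suc j) - 1 / Tq (Suc j)" using Tq_rec by simp
        finally have "1 / m (Suc j) = Tq (Suc j)"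
          using invdiff_inj[of "1 / m (Suc j)" "Tq (Suc j)"] mp Tq_pos by simp
        then show ?thesis using Suc mp Tq_pos[of "Suc j"] by (simp add: field_simps)
      qed
    qed
  qed
  have "mseq = (THE m. P m)" unfolding mseq_def P_def by simp
  also have "\<dots> = (\<lambda>n. 1 / Tq n)"
    using P1 P2 by (rule the_equality)
  finally show ?thesis .
qed

lemma mseq_Tq: "mseq n = 1 / Tq n" by (simp add: mseq_eq)

lemma Tq_mono: "Tq n \<le> Tq (Suc n)"
  using Tq_Suc[of n] Tq_pos[of "Suc n"] by (smt (verit) divide_pos_pos)

lemma Tq_sq: "Tq (Suc n) ^ 2 \<ge> Tq n ^ 2 + 1"
proof -
  have "Tq (Suc n) ^ 2 = Tq n * Tq (Suc n) + 1"
    using Tq_Suc[of n] Tq_pos[of "Suc n"] by (simp add: field_simps power2_eq_square)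
  moreover have "Tq n * Tq (Suc n) \<ge> Tq n * Tq n"
    using Tq_mono[of n] Tq_pos[of n] by (simp add: mult_left_mono)
  ultimately show ?thesis by (simp add: power2_eq_square)
qed

lemma Tq_sq_ge: "Tq n ^ 2 \<ge> real n + 1"
proof (induction n)
  case (Suc n) then show ?case using Tq_sq[of n] by simp
qed simp

lemma Tq_tendsto: "filterlim Tq at_top sequentially"
proof -
  have "Tq n \<ge> sqrt (real n + 1)" for n
    using Tq_sq_ge[of n] Tq_pos[of n] by (simp add: real_le_lsqrt real_sqrt_le_iff)
  moreover have "filterlim (\<lambda>n. sqrt (real n + 1)) at_top sequentially"
    by real_asymp
  ultimately show ?thesis
    using filterlim_at_top_mono by (smt (verit) always_eventually)
qed

lemma psi_diff: "a > 0 \<Longrightarrow> b > 0 \<Longrightarrow> psi b - psi a = (b - a) * (1 + 1 / (a * b))"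
  by (simp add: psi_def field_simps)

lemma psi_Tq: "psi (Tq (Suc n)) = Tq n"
  using Tq_rec[of n] by (simp add: psi_def)

lemma psi_iter_bound:
  "Tq n \<le> a \<Longrightarrow> a \<le> b \<Longrightarrow>
     0 \<le> (psi ^^ Suc n) b - (psi ^^ Suc n) a \<and>
     (psi ^^ Suc n) b - (psi ^^ Suc n) a \<le> (b - a) * (2 * Tq n)"
proof (induction n arbitrary: a b)
  case 0
  then have a: "a \<ge> 1" by simp
  have e: "psi b - psi a = (b - a) * (1 + 1 / (a * b))" using psi_diff[of a b] 0 a by simp
  have "1 / (a * b) \<le> 1" using a 0 by (simp add: field_simps) (metis mult_mono' dual_order.trans less_eq_real_def zero_le_one mult_1)
  moreover have "1 / (a * b) \<ge> 0" using a 0 by simp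
  ultimately have "(b - a) * (1 + 1 / (a * b)) \<le> (b - a) * 2"
    using 0 by (intro mult_left_mono) auto
  then show ?case using e 0 by simp
next
  case (Suc n)
  have Tp: "Tq (Suc n) > 0" by (rule Tq_pos)
  have a: "a > 0" using Suc Tp by linarith
  have b: "b > 0" using Suc a by linarith
  have e: "psi b - psi a = (b - a) * (1 + 1 / (a * b))" using psi_diff a b by simp
  have "(b - a) * (1 + 1 / (a * b)) \<ge> 0" using a b Suc by (intro mult_nonneg_nonneg) auto
  then have mono: "psi a \<le> psi b" using e by simp
  have "(a - Tq (Suc n)) * (1 + 1 / (Tq (Suc n) * a)) \<ge> 0" using a Tp Suc by (intro mult_nonneg_nonneg) auto
  then have "psi (Tq (Suc n)) \<le> psi a"
    using psi_diff[of "Tq (Suc n)" a] Tp a by simp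
  then have low: "Tq n \<le> psi a" using psi_Tq by simp
  have IH: "0 \<le> (psi ^^ Suc n) (psi b) - (psi ^^ Suc n) (psi a) \<and>
     (psi ^^ Suc n) (psi b) - (psi ^^ Suc n) (psi a) \<le> (psi b - psi a) * (2 * Tq n)"
    using Suc.IH[OF low mono] .
  have it: "(psi ^^ Suc (Suc n)) x = (psi ^^ Suc n) (psi x)" for x
    by (simp only: funpow_Suc_right o_def)
  have k1: "1 / (a * b) \<le> 1 / (Tq (Suc n))^2"
  proof -
    have "Tq (Suc n) * Tq (Suc n) \<le> a * b" using Suc Tp by (intro mult_mono) auto
    then show ?thesis using Tp a b by (simp add: power2_eq_square frac_le)
  qed
  have k2: "(1 + 1 / (Tq (Suc n))^2) * Tq n \<le> Tq (Suc n)"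
  proof -
    have tn: "Tq n = Tq (Suc n) - 1 / Tq (Suc n)" using Tq_rec[of n] by simp
    have "(1 + 1 / (Tq (Suc n))^2) * Tq n = Tq (Suc n) - 1 / (Tq (Suc n))^3"
      by (subst tn) (use Tp in \<open>simp add: field_simps power2_eq_square power3_eq_cube\<close>)
    also have "\<dots> \<le> Tq (Suc n)" using Tp by simp
    finally show ?thesis .
  qed
  have "(psi b - psi a) * (2 * Tq n) = (b - a) * (2 * ((1 + 1 / (a * b)) * Tq n))"
    using e by simp
  also have "\<dots> \<le> (b - a) * (2 * ((1 + 1 / (Tq (Suc n))^2) * Tq n))"
    using k1 Suc Tq_pos[of n] by (intro mult_left_mono mult_right_mono) auto
  also have "\<dots> \<le> (b - a) * (2 * Tq (Suc n))"
    using k2 Suc by (intro mult_left_mono) auto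
  finally show ?case using IH it by simp
qed

lemma powr_diff_le:
  fixes q r s :: real
  assumes "1 \<le> q" "q \<le> r" "0 \<le> s" "s \<le> 1"
  shows "r powr s - q powr s \<le> r - q"
proof -
  have q0: "q > 0" using assms by simp
  have "r powr s = q powr s * (r / q) powr s"
    using q0 assms by (simp add: powr_mult[symmetric])
  moreover have "(r / q) powr s \<le> r / q"
  proof -
    have "1 \<le> r / q" using assms q0 by simp
    then have "(r / q) powr s \<le> (r / q) powr 1" using assms by (intro powr_mono) auto
    then show ?thesis using q0 assms by simp
  qed
  moreover have "q powr s \<le> q"
  proof -
    have "q powr s \<le> q powr 1" using assms by (intro powr_mono) auto
    then show ?thesis using q0 by simp
  qed
  ultimately have h1: "r powr s \<le> q powr s * (r / q)"
    by (metis mult_left_mono powr_ge_zero)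
  have h2: "q powr s * (r / q - 1) = q powr s * (r / q) - q powr s"
    by (simp add: algebra_simps)
  have "r powr s - q powr s \<le> q powr s * (r / q - 1)"
    using h1 h2 by linarith
  also have "\<dots> \<le> q * (r / q - 1)"
    using \<open>q powr s \<le> q\<close> assms q0 by (intro mult_right_mono) auto
  also have "\<dots> = r - q" using q0 by (simp add: field_simps)
  finally show ?thesis .
qed

lemma Tq_gap:
  assumes "N \<ge> 1"
  shows "0 \<le> Tq N ^ 2 * (Tq N / Tq (N - 1) - Tq (Suc N) / Tq N) \<and>
         Tq N ^ 2 * (Tq N / Tq (N - 1) - Tq (Suc N) / Tq N) \<le> 2 / (Tq N ^ 2 - 1)"
proof -
  obtain j where N: "N = Suc j" using assms by (cases N) auto
  define y where "y = Tq N"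
  define x where "x = Tq (Suc N)"
  define w where "w = Tq j"
  have wy: "w = y - 1 / y" using Tq_rec[of j] N y_def w_def by simp
  have yx: "y = x - 1 / x" using Tq_rec[of N] y_def x_def by simp
  have y1: "y > 1"
  proof -
    have "Tq 1 ^ 2 \<ge> 2" using Tq_sq_ge[of 1] by simp
    moreover have "Tq 1 \<le> Tq N" using assms by (metis Tq_mono incseq_SucI incseq_def)
    moreover have "Tq 1 > 0" by (rule Tq_pos)
    ultimately have "y ^ 2 \<ge> 2" unfolding y_def by (smt (verit) power_mono)
    then show ?thesis using Tq_pos[of N] y_def by (smt (verit) power2_eq_square mult_le_one)
  qed
  have x0: "x > 0" using Tq_pos x_def by simp
  have xy: "x \<ge> y" using yx x0 by simp
  have w0: "w > 0" using Tq_pos w_def by simp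
  have "y^2 * (y / w - x / y) = 1 / (y^2 - 1) + 1 / x^2"
  proof -
    have wy': "w = (y^2 - 1) / y" using wy y1 by (simp add: field_simps power2_eq_square)
    have yx': "y * x = x^2 - 1" using yx x0 by (simp add: field_simps power2_eq_square)
    have "1 < y^2" using y1 by (simp add: one_less_power)
    then have d: "y^2 - 1 > 0" by simp
    have "y^2 * (y / w - x / y) = y^4 / (y^2 - 1) - y * x"
      unfolding wy' using y1 d by (simp add: field_simps power2_eq_square power4_eq_xxxx)
    also have "\<dots> = 1 / (y^2 - 1) + 1 / x^2"
    proof -
      have a1: "y^4/(y^2-1) = y^2 + 1 + 1/(y^2-1)" using d by (simp add: field_simps power2_eq_square power4_eq_xxxx)
      have a2: "y^2 = x^2 - 2 + 1/x^2" unfolding yx using x0 by (simp add: field_simps power2_eq_square)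
      show ?thesis using a1 a2 yx' by linarith
    qed
    finally show ?thesis .
  qed
  moreover have "1 / x^2 \<le> 1 / (y^2 - 1)"
  proof -
    have "y^2 \<le> x^2" using xy y1 power_mono[of y x 2] by simp
    moreover have "1 < y^2" using y1 by (simp add: one_less_power)
    ultimately show ?thesis by (intro divide_left_mono) (auto intro!: mult_pos_pos)
  qed
  moreover have "1 / (y^2 - 1) \<ge> 0" using y1 by (simp add: one_less_power less_imp_le)
  moreover have "1 / x^2 \<ge> 0" by simp
  ultimately show ?thesis
    using N y_def x_def w_def by simp
qed

definition good :: "(real \<Rightarrow> real) \<Rightarrow> bool" where
  "good g \<longleftrightarrow> (\<forall>s>0. g s > 0) \<and> g 1 = 1 \<and>
            convex_on {0<..} (\<lambda>s. ln (1 / g s)) \<and>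
            (\<forall>s>0. g s = g (s + 1) - 1 / g (s + 1))"

lemma good_pos: "good g \<Longrightarrow> s > 0 \<Longrightarrow> g s > 0" unfolding good_def by blast
lemma good_one: "good g \<Longrightarrow> g 1 = 1" unfolding good_def by blast
lemma good_cvx: "good g \<Longrightarrow> convex_on {0<..} (\<lambda>s. ln (1 / g s))" unfolding good_def by blast
lemma good_rec: "good g \<Longrightarrow> s > 0 \<Longrightarrow> g s = g (s + 1) - 1 / g (s + 1)" unfolding good_def by blast

lemma good_int:
  assumes "good g" shows "g (real (Suc n)) = Tq n"
proof (induction n)
  case 0 then show ?case using good_one[OF assms] by simp
next
  case (Suc n)
  have p: "g (real (Suc (Suc n))) > 0" using good_pos[OF assms] by simp
  have r: "real (Suc n) + 1 = real (Suc (Suc n))" by simp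
  have "g (real (Suc n)) = g (real (Suc n) + 1) - 1 / g (real (Suc n) + 1)"
    using good_rec[OF assms, of "real (Suc n)"] by (simp only: of_nat_0_less_iff zero_less_Suc simp_thms)
  then have e1: "g (real (Suc n)) = g (real (Suc (Suc n))) - 1 / g (real (Suc (Suc n)))"
    by (simp only: r)
  have e2: "g (real (Suc (Suc n))) - 1 / g (real (Suc (Suc n))) = Tq (Suc n) - 1 / Tq (Suc n)"
    using e1 Suc.IH Tq_rec[of n] by linarith
  show ?case by (rule invdiff_inj[OF p Tq_pos e2])
qed

lemma good_iter:
  assumes "good g" shows "s > 0 \<Longrightarrow> g s = (psi ^^ n) (g (s + real n))"
proof (induction n arbitrary: s)
  case 0 then show ?case by simp
next
  case (Suc n)
  have e: "psi (g (s + real n + 1)) = g (s + real n)"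
    using good_rec[OF assms, of "s + real n"] Suc.prems by (simp add: psi_def)
  have r: "s + real (Suc n) = (s + real n) + 1" by simp
  have "(psi ^^ Suc n) (g (s + real (Suc n))) = (psi ^^ n) (psi (g ((s + real n) + 1)))"
    unfolding r by (simp only: funpow_Suc_right o_def)
  also have "\<dots> = (psi ^^ n) (g (s + real n))" by (simp only: e)
  finally have X: "(psi ^^ Suc n) (g (s + real (Suc n))) = (psi ^^ n) (g (s + real n))" .
  show ?case using Suc.IH[OF Suc.prems] X by linarith
qed

lemma good_bounds:
  assumes "good g" "N \<ge> 1" "0 < s" "s \<le> 1"
  shows "Tq N * (Tq (Suc N) / Tq N) powr s \<le> g (real (Suc N) + s) \<and>
         g (real (Suc N) + s) \<le> Tq N * (Tq N / Tq (N - 1)) powr s"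
proof -
  have cv: "convex_on {0<..} (\<lambda>s. ln (1 / g s))" using good_cvx[OF assms(1)] by simp
  have lnv: "ln (1 / g x) = - ln (g x)" if "x > 0" for x
    using good_pos[OF assms(1) that] by (simp add: ln_div)
  have gN: "g (real N) = Tq (N - 1)" using good_int[OF assms(1), of "N - 1"] assms(2) by simp
  have gN1: "g (real (Suc N)) = Tq N" using good_int[OF assms(1)] by simp
  have gN2: "g (real (Suc N) + 1) = Tq (Suc N)" using good_int[OF assms(1), of "Suc N"] by (simp add: add.commute)
  define G where "G = g (real (Suc N) + s)"
  have Gp: "G > 0" unfolding G_def using assms by (intro good_pos[OF assms(1)]) simp
  have T0: "Tq N > 0" "Tq (Suc N) > 0" "Tq (N - 1) > 0" by (simp_all add: Tq_pos)
  have lG: "ln (1 / G) = - ln G" unfolding G_def using assms by (intro lnv) simp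
  have l1': "ln (1 / g (real (Suc N))) = - ln (Tq N)" using lnv[of "real (Suc N)"] gN1 by simp
  have l2': "ln (1 / g (real (Suc N) + 1)) = - ln (Tq (Suc N))" using lnv[of "real (Suc N) + 1"] gN2 by simp
  have l0': "ln (1 / g (real N)) = - ln (Tq (N - 1))" using lnv[of "real N"] gN assms(2) by simp
  have c1: "ln (1 / g ((1 - s) *\<^sub>R real (Suc N) + s *\<^sub>R (real (Suc N) + 1)))
        \<le> (1 - s) * ln (1 / g (real (Suc N))) + s * ln (1 / g (real (Suc N) + 1))"
    using assms by (intro convex_onD[OF cv]) auto
  have p1: "(1 - s) *\<^sub>R real (Suc N) + s *\<^sub>R (real (Suc N) + 1) = real (Suc N) + s"
    by (simp add: algebra_simps)
  have l1: "- ln G \<le> (1 - s) * (- ln (Tq N)) + s * (- ln (Tq (Suc N)))"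
    using c1 unfolding p1 l1' l2' G_def[symmetric] lG .
  have "ln (Tq N * (Tq (Suc N) / Tq N) powr s) = ln (Tq N) + s * (ln (Tq (Suc N)) - ln (Tq N))"
    using T0 by (simp add: ln_mult ln_powr ln_div)
  also have "\<dots> \<le> ln G" using l1 by (simp add: algebra_simps)
  finally have low0: "ln (Tq N * (Tq (Suc N) / Tq N) powr s) \<le> ln G" .
  have low: "Tq N * (Tq (Suc N) / Tq N) powr s \<le> G"
    using low0 T0 Gp by (subst (asm) ln_le_cancel_iff) auto
  define t where "t = 1 / (1 + s)"
  have t01: "0 \<le> t" "t \<le> 1" using assms by (auto simp: t_def)
  have c2: "ln (1 / g ((1 - t) *\<^sub>R real N + t *\<^sub>R (real (Suc N) + s)))
        \<le> (1 - t) * ln (1 / g (real N)) + t * ln (1 / g (real (Suc N) + s))"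
    using assms t01 by (intro convex_onD[OF cv]) auto
  have ts: "t * (1 + s) = 1" using assms by (simp add: t_def)
  have "(1 - t) *\<^sub>R real N + t *\<^sub>R (real (Suc N) + s) = real N + t * (1 + s)"
    by (simp add: algebra_simps)
  then have p2: "(1 - t) *\<^sub>R real N + t *\<^sub>R (real (Suc N) + s) = real (Suc N)"
    using ts by simp
  have u1: "- ln (Tq N) \<le> (1 - t) * (- ln (Tq (N - 1))) + t * (- ln G)"
    using c2 unfolding p2 l1' l0' G_def[symmetric] lG .
  have "(1 + s) * (- ln (Tq N)) \<le> (1 + s) * ((1 - t) * (- ln (Tq (N - 1))) + t * (- ln G))"
    using u1 assms by (intro mult_left_mono) auto
  also have "\<dots> = ((1 + s) * (1 - t)) * (- ln (Tq (N - 1))) + (t * (1 + s)) * (- ln G)"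
    by (simp add: algebra_simps)
  also have "\<dots> = - s * ln (Tq (N - 1)) - ln G"
  proof -
    have "(1 + s) * (1 - t) = s" using ts by (simp add: algebra_simps)
    then show ?thesis using ts by simp
  qed
  finally have u2: "ln G \<le> ln (Tq N) + s * (ln (Tq N) - ln (Tq (N - 1)))"
    by (simp add: algebra_simps)
  have "ln (Tq N * (Tq N / Tq (N - 1)) powr s) = ln (Tq N) + s * (ln (Tq N) - ln (Tq (N - 1)))"
    using T0 by (simp add: ln_mult ln_powr ln_div)
  then have u3: "ln G \<le> ln (Tq N * (Tq N / Tq (N - 1)) powr s)" using u2 by simp
  have up: "G \<le> Tq N * (Tq N / Tq (N - 1)) powr s"
    using u3 T0 Gp by (subst (asm) ln_le_cancel_iff) auto
  show ?thesis using low up unfolding G_def by simp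
qed

lemma good_limit_bound:
  assumes "good g" "N \<ge> 1" "0 < s" "s \<le> 1"
  shows "\<bar>(psi ^^ Suc N) (Tq N * (Tq (Suc N) / Tq N) powr s) - g s\<bar> \<le> 4 / real N"
proof -
  define L where "L = Tq N * (Tq (Suc N) / Tq N) powr s"
  define U where "U = Tq N * (Tq N / Tq (N - 1)) powr s"
  define G where "G = g (real (Suc N) + s)"
  have T0: "Tq N > 0" "Tq (Suc N) > 0" "Tq (N - 1) > 0" by (simp_all add: Tq_pos)
  have b: "L \<le> G" "G \<le> U" using good_bounds[OF assms] unfolding L_def U_def G_def by auto
  have q1: "1 \<le> Tq (Suc N) / Tq N" using Tq_mono[of N] T0 by simp
  have "1 \<le> (Tq (Suc N) / Tq N) powr s" using q1 assms by (intro ge_one_powr_ge_zero) auto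
  then have LT: "Tq N \<le> L" unfolding L_def using T0 by (metis mult_le_cancel_left1 less_le_not_le)
  have gs: "g s = (psi ^^ Suc N) G"
    using good_iter[OF assms(1) assms(3), of "Suc N"] unfolding G_def by (simp add: add.commute)
  have it: "0 \<le> (psi ^^ Suc N) G - (psi ^^ Suc N) L \<and> (psi ^^ Suc N) G - (psi ^^ Suc N) L \<le> (G - L) * (2 * Tq N)"
    using psi_iter_bound[OF LT b(1)] .
  have gap: "0 \<le> Tq N ^ 2 * (Tq N / Tq (N - 1) - Tq (Suc N) / Tq N) \<and>
         Tq N ^ 2 * (Tq N / Tq (N - 1) - Tq (Suc N) / Tq N) \<le> 2 / (Tq N ^ 2 - 1)"
    using Tq_gap[OF assms(2)] .
  have qr: "Tq (Suc N) / Tq N \<le> Tq N / Tq (N - 1)"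
    using gap T0 by (simp add: zero_le_mult_iff)
  have "U - L = Tq N * ((Tq N / Tq (N - 1)) powr s - (Tq (Suc N) / Tq N) powr s)"
    unfolding U_def L_def by (simp add: algebra_simps)
  also have "\<dots> \<le> Tq N * (Tq N / Tq (N - 1) - Tq (Suc N) / Tq N)"
    using powr_diff_le[OF q1 qr] assms T0 by (intro mult_left_mono) auto
  finally have UL: "U - L \<le> Tq N * (Tq N / Tq (N - 1) - Tq (Suc N) / Tq N)" .
  have "(psi ^^ Suc N) G - (psi ^^ Suc N) L \<le> (U - L) * (2 * Tq N)"
    using it b T0 by (smt (verit) mult_right_mono)
  also have "\<dots> \<le> Tq N * (Tq N / Tq (N - 1) - Tq (Suc N) / Tq N) * (2 * Tq N)"
    using UL T0 by (intro mult_right_mono) auto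
  also have "\<dots> = 2 * (Tq N ^ 2 * (Tq N / Tq (N - 1) - Tq (Suc N) / Tq N))"
    by (simp add: power2_eq_square algebra_simps)
  also have "\<dots> \<le> 2 * (2 / (Tq N ^ 2 - 1))" using gap by simp
  also have "\<dots> \<le> 4 / real N"
  proof -
    have "Tq N ^ 2 - 1 \<ge> real N" using Tq_sq_ge[of N] by simp
    then have "2 / (Tq N ^ 2 - 1) \<le> 2 / real N" using assms(2)
      by (intro divide_left_mono) auto
    then show ?thesis by simp
  qed
  finally show ?thesis using it gs unfolding L_def by simp
qed

lemma good_limit:
  assumes "good g" "s \<in> {0<..1}"
  shows "(\<lambda>n. (psi ^^ n) ((1 / mseq (n - 1)) * (mseq (n - 1) / mseq n) powr s)) \<longlonglongrightarrow> g s"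
proof -
  have s: "0 < s" "s \<le> 1" using assms by auto
  have eq: "(1 / mseq (Suc N - 1)) * (mseq (Suc N - 1) / mseq (Suc N)) powr s
            = Tq N * (Tq (Suc N) / Tq N) powr s" for N
    using Tq_pos[of N] Tq_pos[of "Suc N"] by (simp add: mseq_Tq)
  have "(\<lambda>N. (psi ^^ Suc N) (Tq N * (Tq (Suc N) / Tq N) powr s)) \<longlonglongrightarrow> g s"
  proof (rule tendsto_sandwich[where f = "\<lambda>N. g s - 4 / real N" and h = "\<lambda>N. g s + 4 / real N"])
    have ev: "eventually (\<lambda>N. N \<ge> (1::nat)) sequentially" by (rule eventually_ge_at_top)
    show "eventually (\<lambda>N. g s - 4 / real N \<le> (psi ^^ Suc N) (Tq N * (Tq (Suc N) / Tq N) powr s)) sequentially"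
      using ev by eventually_elim (use good_limit_bound[OF assms(1) _ s] in \<open>fastforce simp: abs_le_iff\<close>)
    show "eventually (\<lambda>N. (psi ^^ Suc N) (Tq N * (Tq (Suc N) / Tq N) powr s) \<le> g s + 4 / real N) sequentially"
      using ev by eventually_elim (use good_limit_bound[OF assms(1) _ s] in \<open>fastforce simp: abs_le_iff\<close>)
    show "(\<lambda>N. g s - 4 / real N) \<longlonglongrightarrow> g s"
      using tendsto_diff[OF tendsto_const lim_const_over_n[of 4]] by simp
    show "(\<lambda>N. g s + 4 / real N) \<longlonglongrightarrow> g s"
      using tendsto_add[OF tendsto_const lim_const_over_n[of 4]] by simp
  qed
  then have "(\<lambda>N. (psi ^^ Suc N) ((1 / mseq (Suc N - 1)) * (mseq (Suc N - 1) / mseq (Suc N)) powr s)) \<longlonglongrightarrow> g s"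
    by (simp only: eq)
  then show ?thesis by (rule LIMSEQ_imp_Suc)
qed

lemma good_unique:
  assumes "good g" "good h" "s > 0"
  shows "g s = h s"
proof -
  have base: "g x = h x" if "0 < x" "x \<le> 1" for x
    using good_limit[OF assms(1), of x] good_limit[OF assms(2), of x] that
    by (auto intro: LIMSEQ_unique)
  have "\<forall>x. 0 < x \<and> x \<le> real k + 1 \<longrightarrow> g x = h x" for k
  proof (induction k)
    case 0 then show ?case using base by simp
  next
    case (Suc k)
    show ?case
    proof (intro allI impI)
      fix x assume x: "0 < x \<and> x \<le> real (Suc k) + 1"
      show "g x = h x"
      proof (cases "x \<le> real k + 1")
        case True then show ?thesis using Suc x by auto
      next
        case False
        then have x1: "x - 1 > 0" "x - 1 \<le> real k + 1" using x by auto
        then have e: "g (x - 1) = h (x - 1)" using Suc by auto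
        have "g (x - 1) = g x - 1 / g x" "h (x - 1) = h x - 1 / h x"
          using good_rec[OF assms(1), of "x - 1"] good_rec[OF assms(2), of "x - 1"] x1 by auto
        moreover have "g x > 0" "h x > 0" using good_pos[OF assms(1)] good_pos[OF assms(2)] x by auto
        ultimately show ?thesis using e invdiff_inj by metis
      qed
    qed
  qed
  moreover have "s \<le> real (nat \<lceil>s\<rceil>) + 1" by linarith
  ultimately show ?thesis using assms(3) by blast
qed

lemma exp_m1_le:
  fixes v :: complex
  assumes "Re v \<le> 0"
  shows "norm (exp v - 1) \<le> norm v"
proof -
  have "norm (exp v - exp 0) \<le> 1 * norm (v - 0)"
  proof (rule field_differentiable_bound[where S = "closed_segment 0 v" and f' = exp])
    show "convex (closed_segment 0 v)" by simp
    show "(exp has_field_derivative exp z) (at z within closed_segment 0 v)" for z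
      by (rule DERIV_subset[OF DERIV_exp]) simp
    show "norm (exp z) \<le> 1" if zin: "z \<in> closed_segment 0 v" for z
    proof -
      obtain u where u: "z = u *\<^sub>R v" "0 \<le> u" "u \<le> 1"
        using zin by (auto simp: closed_segment_def)
      have "Re z \<le> 0" using u assms by (simp add: mult_nonneg_nonpos)
      then show ?thesis by (simp add: norm_exp_eq_Re)
    qed
  qed auto
  then show ?thesis by simp
qed

lemma exp_m1_le2:
  fixes v :: complex
  shows "norm (exp v - 1) \<le> norm v * exp (norm v)"
proof -
  have "norm (exp v - exp 0) \<le> exp (norm v) * norm (v - 0)"
  proof (rule field_differentiable_bound[where S = "closed_segment 0 v" and f' = exp])
    show "convex (closed_segment 0 v)" by simp
    show "(exp has_field_derivative exp z) (at z within closed_segment 0 v)" for z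
      by (rule DERIV_subset[OF DERIV_exp]) simp
    show "norm (exp z) \<le> exp (norm v)" if "z \<in> closed_segment 0 v" for z
    proof -
      have "norm z \<le> norm v" using segment_bound1[OF that] by simp
      moreover have "Re z \<le> norm z" by (rule complex_Re_le_cmod)
      ultimately show ?thesis by (simp add: norm_exp_eq_Re)
    qed
  qed auto
  then show ?thesis by (simp add: mult.commute)
qed

lemma exp_rem:
  fixes v :: complex
  shows "norm (exp v - 1 - v) \<le> norm v ^ 2 * exp (norm v)"
proof -
  let ?f = "\<lambda>z. exp z - 1 - z"
  have "norm (?f v - ?f 0) \<le> (norm v * exp (norm v)) * norm (v - 0)"
  proof (rule field_differentiable_bound[where S = "closed_segment 0 v" and f' = "\<lambda>z. exp z - 1"])
    show "convex (closed_segment 0 v)" by simp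
    show "(?f has_field_derivative exp z - 1) (at z within closed_segment 0 v)" for z
      by (auto intro!: derivative_eq_intros)
    show "norm (exp z - 1) \<le> norm v * exp (norm v)" if "z \<in> closed_segment 0 v" for z
    proof -
      have "norm z \<le> norm v" using segment_bound1[OF that] by simp
      then have "norm z * exp (norm z) \<le> norm v * exp (norm v)"
        by (intro mult_mono) auto
      then show ?thesis using exp_m1_le2[of z] by linarith
    qed
  qed auto
  then show ?thesis by (simp add: power2_eq_square mult_ac)
qed

definition HP :: "complex set" where "HP = {z. 0 < Re z}"

lemma open_HP: "open HP"
  unfolding HP_def by (simp add: open_halfspace_Re_gt)

lemma HP_norm_lt:
  fixes a :: real
  assumes "a > 0" "0 < Re z"
  shows "norm (z - of_real a) < norm (z + of_real a)"
proof -
  have "(norm (z - of_real a))^2 = (Re z - a)^2 + (Im z)^2"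
    by (simp add: cmod_power2)
  moreover have "(norm (z + of_real a))^2 = (Re z + a)^2 + (Im z)^2"
    by (simp add: cmod_power2)
  moreover have "a * Re z > 0" using assms by simp
  ultimately have "(norm (z - of_real a))^2 < (norm (z + of_real a))^2"
    by (simp add: power2_eq_square algebra_simps)
  then show ?thesis by (simp add: power2_less_imp_less)
qed

lemma HP_plus_nz:
  fixes a :: real
  assumes "a > 0" "0 < Re z"
  shows "z + of_real a \<noteq> 0"
proof
  assume "z + of_real a = 0"
  then have "Re (z + of_real a) = 0" by simp
  then show False using assms by simp
qed

lemma cayley_Re:
  fixes a :: real and w :: complex
  assumes "a > 0" "norm w < 1"
  shows "0 < Re (of_real a * (1 + w) / (1 - w))"
proof -
  have nz: "1 - w \<noteq> 0" using assms by auto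
  have n1: "(norm w)^2 = (Re w)^2 + (Im w)^2" by (simp add: cmod_power2)
  have "Re ((1 + w) / (1 - w)) = ((1 + Re w) * (1 - Re w) + Im w * (- Im w)) / (norm (1 - w))^2"
    by (simp add: Re_divide cmod_power2)
  also have "\<dots> = (1 - (norm w)^2) / (norm (1 - w))^2"
    unfolding n1 by (simp add: power2_eq_square algebra_simps)
  finally have e: "Re ((1 + w) / (1 - w)) = (1 - (norm w)^2) / (norm (1 - w))^2" .
  have "(norm w)^2 < 1" using assms by (simp add: power_less_one_iff)
  moreover have "(norm (1 - w))^2 > 0" using nz by simp
  ultimately have "Re ((1 + w) / (1 - w)) > 0" unfolding e by simp
  moreover have "of_real a * (1 + w) / (1 - w) = of_real a * ((1 + w) / (1 - w))" by simp
  moreover have "Re (of_real a * ((1 + w) / (1 - w))) = a * Re ((1 + w) / (1 - w))"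
    by (simp only: times_complex.sel Re_complex_of_real Im_complex_of_real mult_zero_left diff_0_right)
  ultimately show ?thesis using assms by simp
qed

lemma hp_schwarz:
  fixes h :: "complex \<Rightarrow> complex" and a :: real
  assumes hol: "h holomorphic_on HP" and bd: "\<And>z. z \<in> HP \<Longrightarrow> norm (h z) \<le> 1"
    and a: "a > 0" and h0: "h (of_real a) = 0"
  obtains g where "g holomorphic_on HP" "\<And>z. z \<in> HP \<Longrightarrow> norm (g z) \<le> 1"
    "\<And>z. z \<in> HP \<Longrightarrow> h z = (z - of_real a) / (z + of_real a) * g z"
proof -
  define A where "A = complex_of_real a"
  have A0: "A \<noteq> 0" using a by (simp add: A_def)
  have AH: "A \<in> HP" using a by (simp add: A_def HP_def)
  have hA: "h A = 0" using h0 by (simp add: A_def)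
  define phi where "phi w = A * (1 + w) / (1 - w)" for w
  define k where "k = h \<circ> phi"
  have phiH: "phi w \<in> HP" if "norm w < 1" for w
    using cayley_Re[OF a that] by (simp add: HP_def phi_def A_def)
  have phihol: "phi holomorphic_on ball 0 1"
    unfolding phi_def by (intro holomorphic_intros) auto
  have khol: "k holomorphic_on ball 0 1"
    unfolding k_def by (rule holomorphic_on_compose_gen[OF phihol hol]) (auto simp: phiH)
  have k0: "k 0 = 0" by (simp add: k_def phi_def hA)
  have kb: "norm (k w) \<le> norm w" if w: "norm w < 1" for w
  proof (rule field_le_epsilon)
    fix e :: real assume e: "e > 0"
    define c where "c = complex_of_real (1 + e)"
    have hc: "norm c = 1 + e" unfolding c_def norm_of_real using e by simp
    have c0: "c \<noteq> 0" using hc e by auto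
    define f where "f z = k z / c" for z
    have "norm (f w) \<le> norm w"
    proof (rule Schwarz_Lemma(1))
      show "f holomorphic_on ball 0 1" unfolding f_def using khol c0
        by (intro holomorphic_intros) auto
      show "f 0 = 0" using k0 by (simp add: f_def)
      show "norm (f z) < 1" if zz: "norm z < 1" for z
      proof -
        have "norm (k z) \<le> 1" using bd[OF phiH[OF zz]] by (simp add: k_def)
        then show ?thesis using e hc by (simp add: f_def norm_divide)
      qed
      show "norm w < 1" by fact
    qed
    then have "norm (k w) \<le> (1 + e) * norm w"
      using e hc by (simp add: f_def norm_divide field_simps)
    also have "\<dots> \<le> norm w + e" using w e by (simp add: algebra_simps)
    finally show "norm (k w) \<le> norm w + e" .
  qed
  have hb: "norm (h z) \<le> norm ((z - A) / (z + A))" if z: "z \<in> HP" for z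
  proof -
    define w where "w = (z - A) / (z + A)"
    have nz: "z + A \<noteq> 0" using HP_plus_nz[OF a] z by (simp add: HP_def A_def)
    have lt: "norm (z - A) < norm (z + A)" using HP_norm_lt[OF a] z by (simp add: HP_def A_def)
    have wn: "norm w < 1" using lt nz by (simp add: w_def norm_divide)
    have w1: "1 - w = 2 * A / (z + A)" using nz by (simp add: w_def field_simps)
    have w2: "1 + w = 2 * z / (z + A)" using nz by (simp add: w_def field_simps)
    have d: "2 * A / (z + A) \<noteq> 0" using nz A0 by simp
    have m: "A * (2 * z / (z + A)) = z * (2 * A / (z + A))" by (simp add: algebra_simps)
    have "phi w = z" unfolding phi_def w1 w2 m using d by simp
    then have "h z = k w" by (simp add: k_def)
    then show ?thesis using kb[OF wn] by (simp add: w_def)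
  qed
  define F where "F z = (if z = A then deriv h A else h z / (z - A) - h A / (z - A))" for z
  have Fhol: "F holomorphic_on HP" unfolding F_def
    by (rule pole_theorem_open[OF hol open_HP, of A "\<lambda>z. h z / (z - A)"]) simp
  define g where "g z = (z + A) * F z" for z
  have ghol: "g holomorphic_on HP" unfolding g_def by (intro holomorphic_intros Fhol)
  have gA: "g z = (z + A) * h z / (z - A)" if "z \<noteq> A" for z
    using that by (simp add: g_def F_def hA)
  have geq: "h z = (z - A) / (z + A) * g z" if z: "z \<in> HP" for z
  proof (cases "z = A")
    case True then show ?thesis by (simp add: hA)
  next
    case False
    have nz: "z + A \<noteq> 0" using HP_plus_nz[OF a] z by (simp add: HP_def A_def)
    have zA: "z - A \<noteq> 0" using False by simp
    have e2: "(z - A) * g z = (z + A) * h z" using zA by (simp add: gA[OF False])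
    have "(z - A) / (z + A) * g z = ((z - A) * g z) / (z + A)" by simp
    also have "\<dots> = h z" unfolding e2 using nz by simp
    finally show ?thesis by simp
  qed
  have gb': "norm (g z) \<le> 1" if z: "z \<in> HP" and zA: "z \<noteq> A" for z
  proof -
    have nz: "z + A \<noteq> 0" using HP_plus_nz[OF a] z by (simp add: HP_def A_def)
    have "norm (h z) \<le> norm (z - A) / norm (z + A)" using hb[OF z] by (simp add: norm_divide)
    then have "norm (h z) * norm (z + A) \<le> norm (z - A)" using nz by (simp add: field_simps)
    moreover have "norm (g z) = norm (z + A) * norm (h z) / norm (z - A)"
      using zA by (simp add: gA norm_divide norm_mult)
    moreover have "norm (z - A) > 0" using zA by simp
    ultimately show ?thesis by (simp add: divide_le_eq_1 mult.commute)
  qed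
  have gb: "norm (g z) \<le> 1" if z: "z \<in> HP" for z
  proof (cases "z = A")
    case False then show ?thesis using gb' z by simp
  next
    case True
    have "continuous_on HP g" using ghol by (rule holomorphic_on_imp_continuous_on)
    then have "isCont g A" using open_HP AH continuous_on_eq_continuous_at by blast
    then have lim: "(g \<longlongrightarrow> g A) (at A)" by (simp add: isCont_def)
    have ev: "eventually (\<lambda>y. y \<in> HP - {A}) (at A)" by (rule eventually_at_in_open[OF open_HP AH])
    have "eventually (\<lambda>y. norm (g y) \<le> 1) (at A)"
      using ev by eventually_elim (use gb' in auto)
    then have "norm (g A) \<le> 1" using Lim_norm_ubound[OF _ lim] by simp
    then show ?thesis using True by simp
  qed
  show ?thesis
    by (rule that[OF ghol gb]) (use geq[unfolded A_def] in auto)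
qed

lemma hp_blaschke:
  assumes hol: "h holomorphic_on HP" and bd: "\<And>z. z \<in> HP \<Longrightarrow> norm (h z) \<le> 1"
  shows "(\<And>n. 1 \<le> n \<Longrightarrow> n \<le> N \<Longrightarrow> h (of_nat n) = 0) \<Longrightarrow>
     \<exists>g. g holomorphic_on HP \<and> (\<forall>z\<in>HP. norm (g z) \<le> 1) \<and>
        (\<forall>z\<in>HP. h z = (\<Prod>n=1..N. (z - of_nat n) / (z + of_nat n)) * g z)"
proof (induction N)
  case 0 then show ?case using hol bd by (intro exI[of _ h]) auto
next
  case (Suc N)
  have "\<exists>g. g holomorphic_on HP \<and> (\<forall>z\<in>HP. norm (g z) \<le> 1) \<and>
        (\<forall>z\<in>HP. h z = (\<Prod>n=1..N. (z - of_nat n) / (z + of_nat n)) * g z)"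
    using Suc.prems by (intro Suc.IH) auto
  then obtain g where ghol: "g holomorphic_on HP" and gb: "\<forall>z\<in>HP. norm (g z) \<le> 1"
    and geq: "\<forall>z\<in>HP. h z = (\<Prod>n=1..N. (z - of_nat n) / (z + of_nat n)) * g z" by blast
  define a where "a = real (Suc N)"
  have a0: "a > 0" by (simp add: a_def)
  have aH: "complex_of_real a \<in> HP" by (simp add: HP_def a_def)
  have BN: "(\<Prod>n=1..N. (complex_of_real a - of_nat n) / (complex_of_real a + of_nat n)) \<noteq> 0"
  proof -
    have "(complex_of_real a - of_nat n) / (complex_of_real a + of_nat n) \<noteq> 0" if "n \<in> {1..N}" for n
    proof -
      have "complex_of_real a - of_nat n = of_real (a - real n)" by simp
      moreover have "a - real n \<noteq> 0" using that by (simp add: a_def)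
      moreover have "complex_of_real a + of_nat n = of_real (a + real n)" by simp
      moreover have "a + real n \<noteq> 0" using that a0 by simp
      ultimately show ?thesis by (simp del: of_real_diff of_real_add)
    qed
    then show ?thesis by (simp add: prod_zero_iff)
  qed
  have "h (complex_of_real a) = 0" using Suc.prems[of "Suc N"] by (simp add: a_def)
  then have g0: "g (complex_of_real a) = 0" using geq aH BN by simp
  obtain g' where g'hol: "g' holomorphic_on HP" and g'b: "\<And>z. z \<in> HP \<Longrightarrow> norm (g' z) \<le> 1"
    and g'eq: "\<And>z. z \<in> HP \<Longrightarrow> g z = (z - of_real a) / (z + of_real a) * g' z"
    using hp_schwarz[OF ghol _ a0 g0] gb by blast
  show ?case
  proof (intro exI[of _ g'] conjI ballI)
    show "g' holomorphic_on HP" by fact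
    show "norm (g' z) \<le> 1" if "z \<in> HP" for z using g'b that by simp
    show "h z = (\<Prod>n = 1..Suc N. (z - of_nat n) / (z + of_nat n)) * g' z" if z: "z \<in> HP" for z
    proof -
      have "complex_of_real a = of_nat (Suc N)" by (simp add: a_def)
      then show ?thesis using geq z g'eq[OF z] by (simp add: mult_ac)
    qed
  qed
qed

lemma factor_bound:
  fixes x :: real and n :: nat
  assumes x: "x > 0" and n: "n \<ge> 1"
  shows "norm ((complex_of_real x - of_nat n) / (complex_of_real x + of_nat n))
           \<le> exp (- (2 * min x 1 / (x + 1)) / real n)"
proof -
  define c where "c = min x 1"
  have c: "0 < c" "c \<le> x" "c \<le> 1" using x by (auto simp: c_def)
  have xn: "x + real n > 0" using x by simp
  have "norm ((complex_of_real x - of_nat n) / (complex_of_real x + of_nat n)) = \<bar>x - real n\<bar> / (x + real n)"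
  proof -
    have "complex_of_real x - of_nat n = of_real (x - real n)" by simp
    moreover have "complex_of_real x + of_nat n = of_real (x + real n)" by simp
    ultimately show ?thesis using xn by (simp add: norm_divide del: of_real_diff of_real_add)
  qed
  also have "\<dots> \<le> 1 - 2 * c / (x + real n)"
  proof (cases "real n \<ge> x")
    case True
    then have "\<bar>x - real n\<bar> / (x + real n) = 1 - 2 * x / (x + real n)" using xn by (simp add: field_simps)
    moreover have "2 * c / (x + real n) \<le> 2 * x / (x + real n)" using c xn by (intro divide_right_mono) auto
    ultimately show ?thesis by simp
  next
    case False
    then have "\<bar>x - real n\<bar> / (x + real n) = 1 - 2 * real n / (x + real n)" using xn by (simp add: field_simps)
    moreover have "2 * c / (x + real n) \<le> 2 * real n / (x + real n)" using c xn n by (intro divide_right_mono) auto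
    ultimately show ?thesis by simp
  qed
  also have "\<dots> \<le> exp (- (2 * c / (x + real n)))" using exp_ge_add_one_self[of "- (2 * c / (x + real n))"] by simp
  also have "\<dots> \<le> exp (- (2 * c / (x + 1)) / real n)"
  proof -
    have "(x + real n) \<le> (x + 1) * real n" using n x by (simp add: algebra_simps)
    then have "2 * c / ((x + 1) * real n) \<le> 2 * c / (x + real n)" using c xn by (intro divide_left_mono) auto
    then show ?thesis by (simp add: field_simps)
  qed
  finally show ?thesis by (simp add: c_def)
qed

lemma prod_bound:
  fixes x :: real
  assumes x: "x > 0"
  shows "norm (\<Prod>n=1..N. (complex_of_real x - of_nat n) / (complex_of_real x + of_nat n))
           \<le> exp (- (2 * min x 1 / (x + 1)) * harm N)"
proof -
  define k where "k = 2 * min x 1 / (x + 1)"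
  have "norm (\<Prod>n=1..N. (complex_of_real x - of_nat n) / (complex_of_real x + of_nat n))
        = (\<Prod>n=1..N. norm ((complex_of_real x - of_nat n) / (complex_of_real x + of_nat n)))"
    by (simp add: prod_norm)
  also have "\<dots> \<le> (\<Prod>n=1..N. exp (- k / real n))"
    using factor_bound[OF x] by (intro prod_mono) (auto simp: k_def)
  also have "\<dots> = exp (\<Sum>n=1..N. - k / real n)" by (simp add: exp_sum)
  also have "(\<Sum>n=1..N. - k / real n) = - k * harm N"
    by (simp add: harm_def sum_distrib_left divide_inverse)
  finally show ?thesis by (simp add: k_def)
qed

lemma rigidity:
  assumes hol: "h holomorphic_on HP" and bd: "\<And>z. z \<in> HP \<Longrightarrow> norm (h z) \<le> 1"
    and zs: "\<And>n. 1 \<le> n \<Longrightarrow> h (of_nat n) = 0" and x: "x > 0"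
  shows "h (complex_of_real x) = 0"
proof -
  define k where "k = 2 * min x 1 / (x + 1)"
  have k: "k > 0" using x by (simp add: k_def)
  have xH: "complex_of_real x \<in> HP" using x by (simp add: HP_def)
  have bnd: "norm (h (complex_of_real x)) \<le> exp (- k * harm N)" for N
  proof -
    obtain g where "g holomorphic_on HP" and gb: "\<forall>z\<in>HP. norm (g z) \<le> 1"
      and geq: "\<forall>z\<in>HP. h z = (\<Prod>n=1..N. (z - of_nat n) / (z + of_nat n)) * g z"
      using hp_blaschke[OF hol bd, of N] zs by blast
    have "norm (h (complex_of_real x)) = norm (\<Prod>n=1..N. (complex_of_real x - of_nat n) / (complex_of_real x + of_nat n)) * norm (g (complex_of_real x))"
      using geq xH by (simp add: norm_mult)
    also have "\<dots> \<le> norm (\<Prod>n=1..N. (complex_of_real x - of_nat n) / (complex_of_real x + of_nat n)) * 1"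
      using gb xH by (intro mult_left_mono) auto
    also have "\<dots> \<le> exp (- k * harm N)" using prod_bound[OF x, of N] by (simp add: k_def)
    finally show ?thesis .
  qed
  have "filterlim (\<lambda>N. k * harm N) at_top sequentially"
    by (rule filterlim_tendsto_pos_mult_at_top[OF tendsto_const k harm_at_top])
  then have "filterlim (\<lambda>N. - (k * harm N)) at_bot sequentially"
    by (simp add: filterlim_uminus_at_top)
  then have lim: "(\<lambda>N. exp (- k * harm N)) \<longlonglongrightarrow> 0"
    using filterlim_compose[OF exp_at_bot] by simp
  have "norm (h (complex_of_real x)) \<le> 0"
    using LIMSEQ_le_const[OF lim] bnd by blast
  then show ?thesis by simp
qed

definition cpow :: "complex \<Rightarrow> real \<Rightarrow> complex" where
  "cpow z t = (if t > 0 then exp (z * of_real (ln t)) else 0)"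

definition Kc :: "complex \<Rightarrow> real \<Rightarrow> complex" where
  "Kc z t = (if t = 1 then z else if 0 \<le> t \<and> t < 1 then (1 - cpow z t) / (1 - of_real t) else 0)"

definition cpowD :: "complex \<Rightarrow> real \<Rightarrow> complex" where
  "cpowD z t = (if t > 0 then of_real (ln t) * cpow z t else 0)"

definition KcD :: "complex \<Rightarrow> real \<Rightarrow> complex" where
  "KcD z t = (if t = 1 then 1 else if 0 < t \<and> t < 1 then - (of_real (ln t) * cpow z t) / (1 - of_real t) else 0)"

lemma ue_bound:
  fixes u b :: real
  assumes "u \<ge> 0" "b > 0"
  shows "u * exp (- b * u) \<le> 1 / b"
proof -
  have "b * u \<le> exp (b * u)" using exp_ge_add_one_self[of "b * u"] by linarith
  then have "b * u * exp (- b * u) \<le> 1"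
    by (simp add: exp_minus field_simps)
  then show ?thesis using assms by (simp add: field_simps mult.commute)
qed

lemma norm_cpow:
  assumes "t > 0"
  shows "norm (cpow z t) = exp (Re z * ln t)"
  using assms by (simp add: cpow_def norm_exp_eq_Re)

lemma norm_cpow_le1:
  assumes "0 \<le> t" "t \<le> 1" "Re z \<ge> 0"
  shows "norm (cpow z t) \<le> 1"
proof (cases "t > 0")
  case True
  then have "ln t \<le> 0" using assms by simp
  then have "Re z * ln t \<le> 0" using assms by (simp add: mult_nonneg_nonpos)
  then show ?thesis using norm_cpow[OF True] by simp
qed (simp add: cpow_def)

lemma cpow_add:
  assumes "t > 0"
  shows "cpow z t = cpow z0 t * exp ((z - z0) * of_real (ln t))"
  using assms by (simp add: cpow_def exp_add[symmetric] algebra_simps)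

lemma cpow_rem:
  fixes z z0 :: complex and t :: real
  assumes t: "0 \<le> t" "t \<le> 1" and z0: "Re z0 > 0" and zz: "norm (z - z0) \<le> Re z0 / 2"
  shows "norm (cpow z t - cpow z0 t - (z - z0) * cpowD z0 t) \<le> 16 / (Re z0)^2 * norm (z - z0)^2"
proof (cases "t > 0")
  case False then show ?thesis by (simp add: cpow_def cpowD_def)
next
  case True
  define u where "u = - ln t"
  have u0: "u \<ge> 0" using t True by (simp add: u_def)
  define v where "v = (z - z0) * of_real (ln t)"
  have nv: "norm v = norm (z - z0) * u" using u0 by (simp add: v_def norm_mult u_def)
  have "cpow z t - cpow z0 t - (z - z0) * cpowD z0 t = cpow z0 t * (exp v - 1 - v)"
    using True by (simp add: cpowD_def cpow_add[OF True, of z z0] v_def algebra_simps)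
  then have "norm (cpow z t - cpow z0 t - (z - z0) * cpowD z0 t) = exp (Re z0 * ln t) * norm (exp v - 1 - v)"
    using True by (simp add: norm_mult norm_cpow)
  also have "\<dots> \<le> exp (- Re z0 * u) * (norm v ^ 2 * exp (norm v))"
    using exp_rem[of v] by (intro mult_mono) (auto simp: u_def)
  also have "\<dots> = norm (z - z0)^2 * (u^2 * exp (- (Re z0 - norm (z - z0)) * u))"
    unfolding nv by (simp add: power_mult_distrib algebra_simps exp_add[symmetric])
  also have "\<dots> \<le> norm (z - z0)^2 * (u^2 * exp (- (Re z0 / 2) * u))"
  proof -
    have "(Re z0 / 2) * u \<le> (Re z0 - norm (z - z0)) * u" using zz u0 by (intro mult_right_mono) auto
    then have h2: "- (Re z0 - norm (z - z0)) * u \<le> - (Re z0 / 2) * u"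
      by (simp only: mult_minus_left neg_le_iff_le)
    have "exp (- (Re z0 - norm (z - z0)) * u) \<le> exp (- (Re z0 / 2) * u)"
      by (subst exp_le_cancel_iff) (rule h2)
    then show ?thesis by (intro mult_left_mono) auto
  qed
  also have "\<dots> \<le> norm (z - z0)^2 * (16 / (Re z0)^2)"
  proof -
    have "u^2 * exp (- (Re z0 / 2) * u) = (u * exp (- (Re z0 / 4) * u))^2"
      by (simp add: power2_eq_square exp_add[symmetric] algebra_simps)
    also have "\<dots> \<le> (1 / (Re z0 / 4))^2"
      using ue_bound[OF u0, of "Re z0 / 4"] z0 u0 by (intro power_mono) auto
    also have "(1 / (Re z0 / 4))^2 = 16 / (Re z0)^2" by (simp add: power2_eq_square field_simps)
    finally show ?thesis by (intro mult_left_mono) auto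
  qed
  finally show ?thesis by (simp add: mult.commute)
qed

lemma cpowD_bound:
  assumes "0 \<le> t" "t \<le> 1" "Re z0 > 0"
  shows "norm (cpowD z0 t) \<le> 1 / Re z0"
proof (cases "t > 0")
  case False then show ?thesis using assms by (simp add: cpowD_def)
next
  case True
  define u where "u = - ln t"
  have u0: "u \<ge> 0" using assms True by (simp add: u_def)
  have "norm (cpowD z0 t) = u * exp (- Re z0 * u)"
    using True u0 by (simp add: cpowD_def norm_mult norm_cpow u_def)
  also have "\<dots> \<le> 1 / Re z0" using ue_bound[OF u0 assms(3)] .
  finally show ?thesis .
qed

lemma ln_bound_01:
  fixes t :: real
  assumes "0 < t" "t < 1"
  shows "- ln t \<le> (1 - t) / t"
proof -
  have "ln (1 / t) \<le> 1 / t - 1" using assms by (intro ln_le_minus_one) simp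
  then show ?thesis using assms by (simp add: ln_div field_simps)
qed

lemma Kc_bound:
  assumes t: "0 \<le> t" "t \<le> 1" and w: "Re w \<ge> 0"
  shows "norm (Kc w t) \<le> 4 + 2 * norm w"
proof -
  consider "t = 1" | "t = 0" | "0 < t" "t \<le> 1/2" | "1/2 < t" "t < 1" using t by linarith
  then show ?thesis
  proof cases
    case 1 then show ?thesis by (simp add: Kc_def)
  next
    case 2 then show ?thesis by (simp add: Kc_def cpow_def)
  next
    case 3
    have "norm (1 - cpow w t) \<le> 2"
      using norm_triangle_ineq4[of 1 "cpow w t"] norm_cpow_le1[of t w] 3 w by simp
    moreover have "norm (1 - complex_of_real t) = 1 - t" using 3
      by (metis abs_of_nonneg diff_ge_0_iff_ge norm_of_real of_real_1 of_real_diff order.trans less_eq_real_def one_le_numeral divide_le_eq_1_pos zero_less_numeral)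
    moreover have "1 - t \<ge> 1/2" using 3 by simp
    ultimately have "norm ((1 - cpow w t) / (1 - complex_of_real t)) \<le> 4"
      by (simp add: norm_divide divide_le_eq)
    moreover have e: "Kc w t = (1 - cpow w t) / (1 - complex_of_real t)" using 3 by (simp add: Kc_def)
    ultimately have "norm (Kc w t) \<le> 4" by (simp only: e)
    then show ?thesis using norm_ge_zero[of w] by linarith
  next
    case 4
    define L where "L = ln t"
    have L: "L \<le> 0" "- L \<le> (1 - t) / t" using 4 ln_bound_01[of t] by (auto simp: L_def)
    have "norm (1 - cpow w t) = norm (exp (w * of_real L) - 1)"
      using 4 by (simp add: cpow_def L_def norm_minus_commute)
    also have "\<dots> \<le> norm (w * of_real L)"
      using L w by (intro exp_m1_le) (simp add: mult_nonneg_nonpos)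
    also have "\<dots> = norm w * (- L)" using L by (simp add: norm_mult)
    also have "\<dots> \<le> norm w * ((1 - t) / t)" using L by (intro mult_left_mono) auto
    also have "\<dots> \<le> norm w * (2 * (1 - t))"
    proof -
      have "1 / t \<le> 2" using 4 by (simp add: field_simps)
      then have "(1 - t) * (1 / t) \<le> (1 - t) * 2" using 4 by (intro mult_left_mono) auto
      then show ?thesis by (intro mult_left_mono) (auto simp: mult.commute)
    qed
    finally have n1: "norm (1 - cpow w t) \<le> 2 * norm w * (1 - t)" by (simp add: algebra_simps)
    have n2: "norm (1 - complex_of_real t) = 1 - t"
    proof -
      have "1 - complex_of_real t = complex_of_real (1 - t)" by simp
      then show ?thesis using 4 by (simp only: norm_of_real)
    qed
    have "norm ((1 - cpow w t) / (1 - complex_of_real t)) \<le> 2 * norm w"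
      using n1 n2 4 by (simp add: norm_divide divide_le_eq)
    then show ?thesis using 4 by (simp add: Kc_def)
  qed
qed

lemma u_over_1mt:
  fixes t :: real
  assumes "0 < t" "t < 1"
  shows "(- ln t) / (1 - t) \<le> exp (- ln t)"
proof -
  have "- ln t \<le> (1 - t) / t" by (rule ln_bound_01[OF assms])
  then have "(- ln t) / (1 - t) \<le> 1 / t" using assms by (simp add: field_simps)
  also have "1 / t = exp (- ln t)" using assms by (simp add: exp_minus inverse_eq_divide)
  finally show ?thesis .
qed

lemma aux_div: "(d::complex) \<noteq> 0 \<Longrightarrow> (1 - a)/d - (1 - b)/d - c * (- e/d) = - (a - b - c * e)/d"
  by (simp add: field_simps)

lemma Kc_rem:
  fixes w w0 :: complex and t :: real
  assumes t: "0 \<le> t" "t \<le> 1" and w0: "Re w0 > 1" and ww: "norm (w - w0) \<le> (Re w0 - 1) / 2"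
  shows "norm (Kc w t - Kc w0 t - (w - w0) * KcD w0 t) \<le> 2 / (Re w0 - 1) * norm (w - w0)^2"
proof -
  consider "t = 1" | "t = 0" | "0 < t" "t < 1" using t by linarith
  then show ?thesis
  proof cases
    case 1 then show ?thesis using w0 by (simp add: Kc_def KcD_def)
  next
    case 2 then show ?thesis using w0 by (simp add: Kc_def KcD_def cpow_def)
  next
    case 3
    define u where "u = - ln t"
    have u0: "u \<ge> 0" using 3 by (simp add: u_def)
    define b where "b = (Re w0 - 1) / 2"
    have b0: "b > 0" using w0 by (simp add: b_def)
    define v where "v = (w - w0) * of_real (ln t)"
    have nv: "norm v = norm (w - w0) * u" using u0 by (simp add: v_def norm_mult u_def)
    have ne: "1 - complex_of_real t \<noteq> 0" using 3 by simp
    have n1t: "norm (1 - complex_of_real t) = 1 - t"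
    proof -
      have "1 - complex_of_real t = complex_of_real (1 - t)" by simp
      then show ?thesis using 3 by (simp only: norm_of_real)
    qed
    have "Kc w t - Kc w0 t - (w - w0) * KcD w0 t
          = - (cpow w t - cpow w0 t - (w - w0) * (of_real (ln t) * cpow w0 t)) / (1 - of_real t)"
    proof -
      have "Kc w t = (1 - cpow w t) / (1 - of_real t)" "Kc w0 t = (1 - cpow w0 t) / (1 - of_real t)"
        "KcD w0 t = - (of_real (ln t) * cpow w0 t) / (1 - of_real t)" using 3 by (auto simp: Kc_def KcD_def)
      then show ?thesis using aux_div[OF ne] by simp
    qed
    also have "cpow w t - cpow w0 t - (w - w0) * (of_real (ln t) * cpow w0 t) = cpow w0 t * (exp v - 1 - v)"
      using 3 by (simp add: cpow_add[of t w w0] v_def algebra_simps)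
    finally have eq: "Kc w t - Kc w0 t - (w - w0) * KcD w0 t = - (cpow w0 t * (exp v - 1 - v)) / (1 - of_real t)" .
    have "norm (Kc w t - Kc w0 t - (w - w0) * KcD w0 t) = exp (Re w0 * ln t) * norm (exp v - 1 - v) / (1 - t)"
      unfolding eq using 3 n1t by (simp add: norm_divide norm_mult norm_cpow)
    also have "\<dots> \<le> exp (- Re w0 * u) * (norm v ^ 2 * exp (norm v)) / (1 - t)"
      using exp_rem[of v] 3 by (intro divide_right_mono mult_mono) (auto simp: u_def)
    also have "\<dots> = norm (w - w0)^2 * (u / (1 - t)) * (u * exp (- (Re w0 - norm (w - w0)) * u))"
      unfolding nv by (simp add: power_mult_distrib power2_eq_square algebra_simps exp_add[symmetric])
    also have "\<dots> \<le> norm (w - w0)^2 * exp u * (u * exp (- (Re w0 - norm (w - w0)) * u))"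
    proof -
      have "u / (1 - t) \<le> exp u" using u_over_1mt[OF 3] by (simp add: u_def)
      moreover have "0 \<le> u * exp (- (Re w0 - norm (w - w0)) * u)" using u0 by simp
      ultimately show ?thesis by (intro mult_right_mono mult_left_mono) auto
    qed
    also have "\<dots> = norm (w - w0)^2 * (u * exp (- (Re w0 - 1 - norm (w - w0)) * u))"
      by (simp add: algebra_simps exp_add[symmetric])
    also have "\<dots> \<le> norm (w - w0)^2 * (u * exp (- b * u))"
    proof -
      have "b * u \<le> (Re w0 - 1 - norm (w - w0)) * u" using ww u0 by (intro mult_right_mono) (auto simp: b_def)
      then have h2: "- (Re w0 - 1 - norm (w - w0)) * u \<le> - b * u"
        by (simp only: mult_minus_left neg_le_iff_le)
      have "exp (- (Re w0 - 1 - norm (w - w0)) * u) \<le> exp (- b * u)"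
        by (subst exp_le_cancel_iff) (rule h2)
      then show ?thesis using u0 by (intro mult_left_mono) auto
    qed
    also have "\<dots> \<le> norm (w - w0)^2 * (1 / b)"
      using ue_bound[OF u0 b0] by (intro mult_left_mono) auto
    finally show ?thesis by (simp add: b_def mult.commute)
  qed
qed

lemma KcD_bound:
  assumes t: "0 \<le> t" "t \<le> 1" and w0: "Re w0 \<ge> 1"
  shows "norm (KcD w0 t) \<le> 1"
proof -
  consider "t = 1" | "t = 0" | "0 < t" "t < 1" using t by linarith
  then show ?thesis
  proof cases
    case 1 then show ?thesis by (simp add: KcD_def)
  next
    case 2 then show ?thesis by (simp add: KcD_def)
  next
    case 3
    define u where "u = - ln t"
    have u0: "u \<ge> 0" using 3 by (simp add: u_def)
    have n1t: "norm (1 - complex_of_real t) = 1 - t"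
    proof -
      have "1 - complex_of_real t = complex_of_real (1 - t)" by simp
      then show ?thesis using 3 by (simp only: norm_of_real)
    qed
    have "norm (KcD w0 t) = (u / (1 - t)) * exp (- Re w0 * u)"
      using 3 u0 n1t by (simp add: KcD_def norm_divide norm_mult norm_cpow u_def)
    also have "\<dots> \<le> exp u * exp (- Re w0 * u)"
      using u_over_1mt[OF 3] unfolding u_def by (intro mult_right_mono) auto
    also have "\<dots> = exp (- (Re w0 - 1) * u)" by (simp add: exp_add[symmetric] algebra_simps)
    also have "\<dots> \<le> 1" using w0 u0 by (simp add: mult_nonpos_nonneg)
    finally show ?thesis .
  qed
qed

lemma integral_field_deriv:
  fixes K :: "complex \<Rightarrow> real \<Rightarrow> complex" and K' :: "real \<Rightarrow> complex"
  assumes ps: "prob_space M" and d: "\<delta> > 0"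
    and intK: "\<And>z. z \<in> ball z0 \<delta> \<Longrightarrow> integrable M (K z)"
    and intK': "integrable M K'"
    and rem: "\<And>z. z \<in> ball z0 \<delta> \<Longrightarrow> AE t in M. norm (K z t - K z0 t - (z - z0) * K' t) \<le> C * norm (z - z0)^2"
  shows "((\<lambda>z. \<integral>t. K z t \<partial>M) has_field_derivative (\<integral>t. K' t \<partial>M)) (at z0)"
proof -
  interpret prob_space M by (rule ps)
  define I where "I z = (\<integral>t. K z t \<partial>M)" for z
  define D where "D = (\<integral>t. K' t \<partial>M)"
  have z0in: "z0 \<in> ball z0 \<delta>" using d by simp
  have key: "norm (I z - I z0 - (z - z0) * D) \<le> C * norm (z - z0)^2" if z: "z \<in> ball z0 \<delta>" for z
  proof -
    have "I z - I z0 - (z - z0) * D = (\<integral>t. K z t - K z0 t - (z - z0) * K' t \<partial>M)"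
      unfolding I_def D_def using intK[OF z] intK[OF z0in] intK' by simp
    then have "norm (I z - I z0 - (z - z0) * D) \<le> (\<integral>t. norm (K z t - K z0 t - (z - z0) * K' t) \<partial>M)"
      by simp
    also have "\<dots> \<le> (\<integral>t. C * norm (z - z0)^2 \<partial>M)"
      using rem[OF z] intK[OF z] intK[OF z0in] intK' by (intro integral_mono_AE) auto
    also have "\<dots> = C * norm (z - z0)^2" by (simp add: prob_space)
    finally show ?thesis .
  qed
  have "((\<lambda>y. (I y - I z0) / (y - z0) - D) \<longlongrightarrow> 0) (at z0)"
  proof (rule Lim_null_comparison)
    have ev: "eventually (\<lambda>y. y \<in> ball z0 \<delta> - {z0}) (at z0)"
      by (rule eventually_at_in_open[OF open_ball z0in])
    show "eventually (\<lambda>y. norm ((I y - I z0) / (y - z0) - D) \<le> \<bar>C\<bar> * norm (y - z0)) (at z0)"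
      using ev
    proof eventually_elim
      case (elim y)
      then have y: "y \<in> ball z0 \<delta>" "y \<noteq> z0" by auto
      have nz: "y - z0 \<noteq> 0" using y by simp
      have "(I y - I z0) / (y - z0) - D = (I y - I z0 - (y - z0) * D) / (y - z0)"
        using nz by (simp add: field_simps)
      then have "norm ((I y - I z0) / (y - z0) - D) = norm (I y - I z0 - (y - z0) * D) / norm (y - z0)"
        by (simp add: norm_divide)
      also have "\<dots> \<le> C * norm (y - z0)^2 / norm (y - z0)"
        using key[OF y(1)] by (intro divide_right_mono) auto
      also have "\<dots> = C * norm (y - z0)" using nz by (simp add: power2_eq_square)
      also have "\<dots> \<le> \<bar>C\<bar> * norm (y - z0)" by (intro mult_right_mono) auto
      finally show ?case .
    qed
    show "((\<lambda>y. \<bar>C\<bar> * norm (y - z0)) \<longlongrightarrow> 0) (at z0)"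
      by (auto intro!: tendsto_eq_intros)
  qed
  then have "((\<lambda>y. (I y - I z0) / (y - z0) - D + D) \<longlongrightarrow> 0 + D) (at z0)"
    by (intro tendsto_add tendsto_const)
  then have "((\<lambda>y. (I y - I z0) / (y - z0)) \<longlongrightarrow> D) (at z0)" by simp
  then show ?thesis unfolding has_field_derivative_iff I_def D_def .
qed

lemma cpow_meas[measurable]: "cpow z \<in> borel_measurable borel"
  unfolding cpow_def by measurable

lemma Kc_meas[measurable]: "Kc z \<in> borel_measurable borel"
  unfolding Kc_def by measurable

lemma cpowD_meas[measurable]: "cpowD z \<in> borel_measurable borel"
  unfolding cpowD_def by measurable

lemma KcD_meas[measurable]: "KcD z \<in> borel_measurable borel"
  unfolding KcD_def by measurable

lemma kern_meas[measurable]: "kern s \<in> borel_measurable borel"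
  unfolding kern_def by measurable

definition Mc :: "real measure \<Rightarrow> complex \<Rightarrow> complex" where
  "Mc M z = (\<integral>t. cpow z t \<partial>M)"

definition Fc :: "real measure \<Rightarrow> complex \<Rightarrow> complex" where
  "Fc M w = (\<integral>t. Kc w t \<partial>M)"

definition Dc :: "real measure \<Rightarrow> complex \<Rightarrow> complex" where
  "Dc M z = Mc M z * Fc M (z + 1) - 1"

definition Mr :: "real measure \<Rightarrow> real \<Rightarrow> real" where
  "Mr M s = (\<integral>t. t powr s \<partial>M)"

locale mmeas =
  fixes M :: "real measure"
  assumes mm: "moment_measure M"
begin

lemma ps: "prob_space M" using mm by (simp add: moment_measure_def)

sublocale prob_space M by (rule ps)

lemma sM: "sets M = sets borel" using mm by (simp add: moment_measure_def)

lemma meas: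
  assumes "f \<in> borel_measurable borel" shows "f \<in> borel_measurable M"
  by (subst measurable_cong_sets[OF sM refl]) (rule assms)

lemma AE01: "AE t in M. 0 \<le> t \<and> t \<le> 1"
proof -
  have ev: "{0..1::real} \<in> events" using sM by simp
  have "emeasure M {0..1} = 1" using mm by (simp add: moment_measure_def)
  then have "prob {0..1} = 1" by (simp add: emeasure_eq_measure)
  then have "AE t in M. t \<in> {0..1}" using AE_in_set_eq_1[OF ev] by simp
  then show ?thesis by simp
qed

lemma mom_int: "integrable M (\<lambda>t. t ^ n)" using mm by (simp add: moment_measure_def)
lemma mom: "(\<integral>t. t ^ n \<partial>M) = mseq n" using mm by (simp add: moment_measure_def)

lemma bnd_int:
  fixes f :: "real \<Rightarrow> 'b::{banach,second_countable_topology}"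
  assumes "f \<in> borel_measurable borel" "AE t in M. norm (f t) \<le> B"
  shows "integrable M f"
  using integrable_const_bound[OF assms(2) meas[OF assms(1)]] .

lemma bnd_norm:
  fixes f :: "real \<Rightarrow> 'b::{banach,second_countable_topology}"
  assumes "f \<in> borel_measurable borel" "AE t in M. norm (f t) \<le> B"
  shows "norm (\<integral>t. f t \<partial>M) \<le> B"
proof -
  have "norm (\<integral>t. f t \<partial>M) \<le> (\<integral>t. norm (f t) \<partial>M)" by simp
  also have "\<dots> \<le> (\<integral>t. B \<partial>M)"
    using assms bnd_int[OF assms] by (intro integral_mono_AE) auto
  also have "\<dots> = B" by (simp add: prob_space)
  finally show ?thesis .
qed

lemma int_cpow:
  assumes "Re z \<ge> 0" shows "integrable M (cpow z)"
proof (rule bnd_int[where B = 1])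
  show "cpow z \<in> borel_measurable borel" by measurable
  show "AE t in M. norm (cpow z t) \<le> 1"
    using AE01 by eventually_elim (use assms in \<open>auto intro: norm_cpow_le1\<close>)
qed

lemma int_Kc:
  assumes "Re w \<ge> 0" shows "integrable M (Kc w)"
proof (rule bnd_int[where B = "4 + 2 * norm w"])
  show "Kc w \<in> borel_measurable borel" by measurable
  show "AE t in M. norm (Kc w t) \<le> 4 + 2 * norm w"
    using AE01 by eventually_elim (use assms in \<open>auto intro: Kc_bound\<close>)
qed

lemma Mc_bound:
  assumes "Re z \<ge> 0" shows "norm (Mc M z) \<le> 1"
  unfolding Mc_def
proof (rule bnd_norm)
  show "cpow z \<in> borel_measurable borel" by measurable
  show "AE t in M. norm (cpow z t) \<le> 1"
    using AE01 by eventually_elim (use assms in \<open>auto intro: norm_cpow_le1\<close>)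
qed

lemma Fc_bound:
  assumes "Re w \<ge> 0" shows "norm (Fc M w) \<le> 4 + 2 * norm w"
  unfolding Fc_def
proof (rule bnd_norm)
  show "Kc w \<in> borel_measurable borel" by measurable
  show "AE t in M. norm (Kc w t) \<le> 4 + 2 * norm w"
    using AE01 by eventually_elim (use assms in \<open>auto intro: Kc_bound\<close>)
qed

lemma Mc_deriv:
  assumes z0: "Re z0 > 0"
  shows "(Mc M has_field_derivative (\<integral>t. cpowD z0 t \<partial>M)) (at z0)"
  unfolding Mc_def
proof (rule integral_field_deriv[OF ps, where \<delta> = "Re z0 / 2" and C = "16 / (Re z0)^2"])
  show "Re z0 / 2 > 0" using z0 by simp
  show "integrable M (cpow z)" if z: "z \<in> ball z0 (Re z0 / 2)" for z
  proof -
    have "norm (z - z0) < Re z0 / 2" using z by (simp add: dist_norm norm_minus_commute)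
    moreover have "Re z0 - Re z \<le> norm (z - z0)"
      using complex_Re_le_cmod[of "z0 - z"] by (simp add: norm_minus_commute)
    ultimately have "Re z \<ge> 0" using z0 by argo
    then show ?thesis by (rule int_cpow)
  qed
  show "integrable M (cpowD z0)"
  proof (rule bnd_int[where B = "1 / Re z0"])
    show "cpowD z0 \<in> borel_measurable borel" by measurable
    show "AE t in M. norm (cpowD z0 t) \<le> 1 / Re z0"
      using AE01 by eventually_elim (use z0 in \<open>auto intro: cpowD_bound\<close>)
  qed
  show "AE t in M. norm (cpow z t - cpow z0 t - (z - z0) * cpowD z0 t) \<le> 16 / (Re z0)^2 * norm (z - z0)^2"
    if z: "z \<in> ball z0 (Re z0 / 2)" for z
  proof -
    have nb: "norm (z - z0) \<le> Re z0 / 2" using z by (simp add: dist_norm norm_minus_commute)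
    show ?thesis using AE01
    proof eventually_elim
      case (elim t) then show ?case using cpow_rem[of t z0 z] z0 nb by blast
    qed
  qed
qed

lemma Fc_deriv:
  assumes w0: "Re w0 > 1"
  shows "(Fc M has_field_derivative (\<integral>t. KcD w0 t \<partial>M)) (at w0)"
  unfolding Fc_def
proof (rule integral_field_deriv[OF ps, where \<delta> = "(Re w0 - 1) / 2" and C = "2 / (Re w0 - 1)"])
  show "(Re w0 - 1) / 2 > 0" using w0 by simp
  show "integrable M (Kc w)" if w: "w \<in> ball w0 ((Re w0 - 1) / 2)" for w
  proof -
    have "norm (w - w0) < (Re w0 - 1) / 2" using w by (simp add: dist_norm norm_minus_commute)
    moreover have "Re w0 - Re w \<le> norm (w - w0)"
      using complex_Re_le_cmod[of "w0 - w"] by (simp add: norm_minus_commute)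
    ultimately have "Re w \<ge> 0" using w0 by argo
    then show ?thesis by (rule int_Kc)
  qed
  show "integrable M (KcD w0)"
  proof (rule bnd_int[where B = 1])
    show "KcD w0 \<in> borel_measurable borel" by measurable
    show "AE t in M. norm (KcD w0 t) \<le> 1"
      using AE01 by eventually_elim (use w0 in \<open>auto intro: KcD_bound\<close>)
  qed
  show "AE t in M. norm (Kc w t - Kc w0 t - (w - w0) * KcD w0 t) \<le> 2 / (Re w0 - 1) * norm (w - w0)^2"
    if w: "w \<in> ball w0 ((Re w0 - 1) / 2)" for w
  proof -
    have nb: "norm (w - w0) \<le> (Re w0 - 1) / 2" using w by (simp add: dist_norm norm_minus_commute)
    show ?thesis using AE01
    proof eventually_elim
      case (elim t) then show ?case using Kc_rem[of t w0 w] w0 nb by blast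
    qed
  qed
qed

lemma Dc_hol: "Dc M holomorphic_on HP"
proof -
  have "\<exists>f'. DERIV (Dc M) z :> f'" if z: "z \<in> HP" for z
  proof -
    have z0: "Re z > 0" using z by (simp add: HP_def)
    have d1: "(Mc M has_field_derivative (\<integral>t. cpowD z t \<partial>M)) (at z)" by (rule Mc_deriv[OF z0])
    have d2: "((\<lambda>y. Fc M (y + 1)) has_field_derivative (\<integral>t. KcD (z + 1) t \<partial>M) * 1) (at z)"
      by (rule DERIV_chain2[OF Fc_deriv]) (use z0 in \<open>auto intro!: derivative_eq_intros\<close>)
    have d3: "((\<lambda>y. Mc M y * Fc M (y + 1)) has_field_derivative
              Mc M z * ((\<integral>t. KcD (z + 1) t \<partial>M) * 1) + (\<integral>t. cpowD z t \<partial>M) * Fc M (z + 1)) (at z)"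
      by (rule DERIV_mult'[OF d1 d2])
    have "DERIV (\<lambda>y. Mc M y * Fc M (y + 1) - 1) z :>
            Mc M z * ((\<integral>t. KcD (z + 1) t \<partial>M) * 1) + (\<integral>t. cpowD z t \<partial>M) * Fc M (z + 1) - 0"
      by (rule DERIV_diff[OF d3 DERIV_const])
    then show ?thesis unfolding Dc_def[abs_def] by blast
  qed
  then show ?thesis using open_HP by (simp add: holomorphic_on_open)
qed

lemma Dc_bound: "z \<in> HP \<Longrightarrow> norm (Dc M z) \<le> 7 * norm (z + 1)"
proof -
  assume z: "z \<in> HP"
  then have z0: "Re z > 0" by (simp add: HP_def)
  have n1: "norm (z + 1) \<ge> 1"
    using complex_Re_le_cmod[of "z + 1"] z0 by simp
  have "norm (Dc M z) \<le> norm (Mc M z) * norm (Fc M (z + 1)) + 1"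
    unfolding Dc_def using norm_triangle_ineq4[of "Mc M z * Fc M (z + 1)" 1] by (simp add: norm_mult)
  also have "\<dots> \<le> 1 * (4 + 2 * norm (z + 1)) + 1"
    using Mc_bound[of z] Fc_bound[of "z + 1"] z0 by (intro add_right_mono mult_mono) auto
  also have "\<dots> \<le> 7 * norm (z + 1)" using n1 by simp
  finally show ?thesis .
qed

end

lemma cpow_real:
  assumes "0 \<le> t" shows "cpow (of_real s) t = of_real (t powr s)"
proof (cases "t = 0")
  case True then show ?thesis by (simp add: cpow_def)
next
  case False
  then have "t > 0" using assms by simp
  have "cpow (of_real s) t = exp (of_real (s * ln t))" using \<open>t > 0\<close> by (simp add: cpow_def)
  also have "\<dots> = of_real (exp (s * ln t))" by (rule exp_of_real)
  also have "exp (s * ln t) = t powr s" using \<open>t > 0\<close> by (simp add: powr_def)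
  finally show ?thesis .
qed

lemma Kc_real:
  assumes "0 \<le> t" "t \<le> 1" shows "Kc (of_real s) t = of_real (kern s t)"
proof (cases "t = 1")
  case True then show ?thesis by (simp add: Kc_def kern_def)
next
  case False
  then have "t < 1" using assms by simp
  then show ?thesis using assms False by (simp add: Kc_def kern_def cpow_real)
qed

lemma exp_convex_comb:
  fixes a b u :: real
  assumes "0 \<le> u" "u \<le> 1"
  shows "exp ((1 - u) * a + u * b) \<le> (1 - u) * exp a + u * exp b"
proof -
  define p where "p = (1 - u) * a + u * b"
  have ea: "exp p * (1 + (a - p)) \<le> exp a"
  proof -
    have "exp p * (1 + (a - p)) \<le> exp p * exp (a - p)" using exp_ge_add_one_self[of "a - p"] by (intro mult_left_mono) auto
    then show ?thesis by (simp add: exp_diff)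
  qed
  have eb: "exp p * (1 + (b - p)) \<le> exp b"
  proof -
    have "exp p * (1 + (b - p)) \<le> exp p * exp (b - p)" using exp_ge_add_one_self[of "b - p"] by (intro mult_left_mono) auto
    then show ?thesis by (simp add: exp_diff)
  qed
  have "exp p = (1 - u) * (exp p * (1 + (a - p))) + u * (exp p * (1 + (b - p)))"
    by (simp add: p_def algebra_simps)
  also have "\<dots> \<le> (1 - u) * exp a + u * exp b"
    using ea eb assms by (intro add_mono mult_left_mono) auto
  finally show ?thesis by (simp add: p_def)
qed

context mmeas
begin

lemma icong:
  fixes f g :: "real \<Rightarrow> 'b::{banach,second_countable_topology}"
  assumes "AE t in M. f t = g t" "f \<in> borel_measurable borel" "g \<in> borel_measurable borel"
  shows "(\<integral>t. f t \<partial>M) = (\<integral>t. g t \<partial>M)"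
  by (rule integral_cong_AE[OF meas[OF assms(2)] meas[OF assms(3)] assms(1)])

lemma icong_int:
  fixes f g :: "real \<Rightarrow> 'b::{banach,second_countable_topology}"
  assumes "integrable M f" "AE t in M. f t = g t" "f \<in> borel_measurable borel" "g \<in> borel_measurable borel"
  shows "integrable M g"
  using integrable_cong_AE[OF meas[OF assms(3)] meas[OF assms(4)] assms(2)] assms(1) by simp

lemma int_powr: "s \<ge> 0 \<Longrightarrow> integrable M (\<lambda>t. t powr s)"
proof -
  assume s: "s \<ge> 0"
  have "integrable M (cpow (of_real s))" using s by (intro int_cpow) simp
  moreover have "AE t in M. cpow (of_real s) t = complex_of_real (t powr s)"
    using AE01 by eventually_elim (auto simp: cpow_real)
  ultimately have "integrable M (\<lambda>t. complex_of_real (t powr s))"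
    by (rule icong_int) measurable
  then show ?thesis by (simp add: complex_of_real_integrable_eq)
qed

lemma Mc_real: "s \<ge> 0 \<Longrightarrow> Mc M (of_real s) = of_real (Mr M s)"
proof -
  assume s: "s \<ge> 0"
  have "AE t in M. cpow (of_real s) t = complex_of_real (t powr s)"
    using AE01 by eventually_elim (auto simp: cpow_real)
  then have "Mc M (of_real s) = (\<integral>t. complex_of_real (t powr s) \<partial>M)"
    unfolding Mc_def by (rule icong) measurable
  then show ?thesis by (simp add: Mr_def)
qed

lemma int_kern: "s \<ge> 0 \<Longrightarrow> integrable M (kern s)"
proof -
  assume s: "s \<ge> 0"
  have "integrable M (Kc (of_real s))" using s by (intro int_Kc) simp
  moreover have "AE t in M. Kc (of_real s) t = complex_of_real (kern s t)"
    using AE01 by eventually_elim (auto simp: Kc_real)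
  ultimately have "integrable M (\<lambda>t. complex_of_real (kern s t))"
    by (rule icong_int) measurable
  then show ?thesis by (simp add: complex_of_real_integrable_eq)
qed

lemma Fc_real: "s \<ge> 0 \<Longrightarrow> Fc M (of_real s) = of_real (ffun M s)"
proof -
  assume s: "s \<ge> 0"
  have "AE t in M. Kc (of_real s) t = complex_of_real (kern s t)"
    using AE01 by eventually_elim (auto simp: Kc_real)
  then have "Fc M (of_real s) = (\<integral>t. complex_of_real (kern s t) \<partial>M)"
    unfolding Fc_def by (rule icong) measurable
  then show ?thesis by (simp add: ffun_def)
qed

lemma Mr_nat: "n \<ge> 1 \<Longrightarrow> Mr M (real n) = mseq n"
proof -
  assume n: "n \<ge> 1"
  have "AE t in M. t powr (real n) = t ^ n"
    using AE01
  proof eventually_elim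
    case (elim t)
    show ?case
    proof (cases "t = 0")
      case True then show ?thesis using n by simp
    next
      case False then have "t > 0" using elim by simp
      then show ?thesis by (rule powr_realpow)
    qed
  qed
  then have "Mr M (real n) = (\<integral>t. t ^ n \<partial>M)"
    unfolding Mr_def by (rule icong) measurable
  then show ?thesis by (simp add: mom)
qed

lemma Tq_sum2: "(\<Sum>k<Suc n. 1 / Tq k) = Tq n"
proof (induction n)
  case (Suc n) then show ?case using Tq_Suc[of n] by simp
qed simp

lemma ffun_nat: "ffun M (real n + 1) = Tq n"
proof -
  have "AE t in M. kern (real n + 1) t = (\<Sum>k<Suc n. t ^ k)"
    using AE01
  proof eventually_elim
    case (elim t)
    show ?case
    proof (cases "t = 1")
      case True then show ?thesis by (simp add: kern_def)
    next
      case False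
      have "t powr (real n + 1) = t ^ Suc n"
      proof (cases "t = 0")
        case True then show ?thesis by simp
      next
        case False then have tp: "t > 0" using elim by simp
        have "real n + 1 = real (Suc n)" by simp
        then show ?thesis by (simp only: powr_realpow[OF tp])
      qed
      then have k: "kern (real n + 1) t = (1 - t ^ Suc n) / (1 - t)" using False by (simp add: kern_def)
      have g: "(\<Sum>k<Suc n. t ^ k) = (1 - t ^ Suc n) / (1 - t)"
        using False by (simp only: sum_gp_strict) simp
      show ?thesis using k g by simp
    qed
  qed
  then have "ffun M (real n + 1) = (\<integral>t. (\<Sum>k<Suc n. t ^ k) \<partial>M)"
    unfolding ffun_def by (rule icong) measurable
  also have "\<dots> = (\<Sum>k<Suc n. (\<integral>t. t ^ k \<partial>M))"
    by (simp add: mom_int)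
  also have "\<dots> = (\<Sum>k<Suc n. 1 / Tq k)" by (simp add: mom mseq_Tq)
  also have "\<dots> = Tq n" by (rule Tq_sum2)
  finally show ?thesis .
qed

lemma Dc_nat: "n \<ge> 1 \<Longrightarrow> Dc M (of_nat n) = 0"
proof -
  assume n: "n \<ge> 1"
  have "Mc M (of_nat n) = of_real (mseq n)"
    using Mc_real[of "real n"] Mr_nat[OF n] by simp
  moreover have "Fc M (of_nat n + 1) = of_real (Tq n)"
    using Fc_real[of "real n + 1"] ffun_nat[of n] by simp
  ultimately have "Dc M (of_nat n) = of_real (mseq n * Tq n) - 1" by (simp add: Dc_def)
  also have "mseq n * Tq n = 1" using Tq_pos[of n] by (simp add: mseq_Tq)
  finally show ?thesis by simp
qed

lemma Dc_real: "s \<ge> 0 \<Longrightarrow> Dc M (of_real s) = of_real (Mr M s * ffun M (s + 1) - 1)"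
proof -
  assume s: "s \<ge> 0"
  have "Fc M (of_real s + 1) = of_real (ffun M (s + 1))"
    using Fc_real[of "s + 1"] s by simp
  then show ?thesis using Mc_real[OF s] by (simp add: Dc_def)
qed

lemma Dc_zero:
  assumes s: "s > 0" shows "Mr M s * ffun M (s + 1) = 1"
proof -
  define h where "h z = Dc M z / (7 * (z + 1))" for z
  have nz: "z + 1 \<noteq> 0" if "z \<in> HP" for z
  proof
    assume "z + 1 = 0" then have "Re (z + 1) = 0" by simp
    then show False using that by (simp add: HP_def)
  qed
  have nz7: "7 * (z + 1) \<noteq> 0" if "z \<in> HP" for z using nz[OF that] by (metis mult_eq_0_iff zero_neq_numeral)
  have hhol: "h holomorphic_on HP" unfolding h_def
    by (rule holomorphic_on_divide[OF Dc_hol]) (auto intro!: holomorphic_intros simp del: distrib_left_numeral distrib_right_numeral dest: nz7)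
  have hb: "norm (h z) \<le> 1" if z: "z \<in> HP" for z
  proof -
    have "norm (h z) = norm (Dc M z) / (7 * norm (z + 1))" by (simp add: h_def norm_divide norm_mult del: distrib_left_numeral)
    also have "\<dots> \<le> 1" using Dc_bound[OF z] nz[OF z] by (simp add: divide_le_eq_1)
    finally show ?thesis .
  qed
  have hz: "h (of_nat n) = 0" if "1 \<le> n" for n using Dc_nat[OF that] by (simp add: h_def)
  have "h (of_real s) = 0" by (rule rigidity[OF hhol hb hz s]) auto
  moreover have "7 * (of_real s + 1) \<noteq> (0::complex)" using s by (intro nz7) (simp add: HP_def)
  ultimately have "Dc M (of_real s) = 0" by (simp add: h_def del: distrib_left_numeral)
  then have "complex_of_real (Mr M s * ffun M (s + 1) - 1) = 0" using Dc_real[of s] s by simp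
  then have "Mr M s * ffun M (s + 1) - 1 = 0" by (simp only: of_real_eq_0_iff)
  then show ?thesis by simp
qed

lemma ffun_step: "s > 0 \<Longrightarrow> ffun M (s + 1) = ffun M s + Mr M s"
proof -
  assume s: "s > 0"
  have "AE t in M. kern (s + 1) t = kern s t + t powr s"
    using AE01
  proof eventually_elim
    case (elim t)
    show ?case
    proof (cases "t = 1")
      case True then show ?thesis by (simp add: kern_def)
    next
      case False
      then have t1: "1 - t \<noteq> 0" by simp
      have "t powr (s + 1) = t powr s * t"
      proof (cases "t = 0")
        case True then show ?thesis by simp
      next
        case False then show ?thesis using elim by (simp add: powr_add)
      qed
      then show ?thesis using False t1 by (simp add: kern_def field_simps)
    qed
  qed
  then have "ffun M (s + 1) = (\<integral>t. kern s t + t powr s \<partial>M)"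
    unfolding ffun_def by (rule icong) measurable
  also have "\<dots> = ffun M s + Mr M s"
    unfolding ffun_def Mr_def using int_kern[of s] int_powr[of s] s by simp
  finally show ?thesis .
qed

lemma kern_pos:
  assumes "0 \<le> t" "t \<le> 1" "s > 0" shows "kern s t > 0"
proof (cases "t = 1")
  case True then show ?thesis using assms by (simp add: kern_def)
next
  case False
  have "t powr s < 1"
  proof (cases "t = 0")
    case True then show ?thesis by simp
  next
    case False
    then have "ln t < 0" using assms \<open>t \<noteq> 1\<close> by simp
    then have "s * ln t < 0" using assms by (simp add: mult_pos_neg)
    then show ?thesis using False assms by (simp add: powr_def)
  qed
  then show ?thesis using False assms by (simp add: kern_def)
qed

lemma ffun_pos: "s > 0 \<Longrightarrow> ffun M s > 0"
proof -
  assume s: "s > 0"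
  have ae: "AE t in M. kern s t > 0"
    using AE01 by eventually_elim (use s in \<open>auto intro: kern_pos\<close>)
  have int: "integrable M (kern s)" using int_kern[of s] s by simp
  have ge: "ffun M s \<ge> 0" unfolding ffun_def
    using ae by (intro integral_nonneg_AE) (auto elim: eventually_mono)
  have "ffun M s \<noteq> 0"
  proof
    assume "ffun M s = 0"
    moreover have ae0: "AE t in M. 0 \<le> kern s t" using ae by eventually_elim simp
    ultimately have "AE t in M. kern s t = 0" unfolding ffun_def
      using integral_nonneg_eq_0_iff_AE[OF int ae0] by simp
    with ae have "AE t in M. False" by eventually_elim simp
    then show False by simp
  qed
  then show ?thesis using ge by simp
qed

lemma ffun_one: "ffun M 1 = 1"
proof -
  have "AE t in M. kern 1 t = 1"
    using AE01 by eventually_elim (auto simp: kern_def)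
  then have "ffun M 1 = (\<integral>t. 1 \<partial>M)"
    unfolding ffun_def by (rule icong) measurable
  then show ?thesis by (simp add: prob_space)
qed

lemma ffun_rec: "s > 0 \<Longrightarrow> ffun M s = ffun M (s + 1) - 1 / ffun M (s + 1)"
proof -
  assume s: "s > 0"
  have p: "ffun M (s + 1) > 0" using ffun_pos[of "s + 1"] s by simp
  have "Mr M s = 1 / ffun M (s + 1)" using Dc_zero[OF s] p by (simp add: field_simps)
  then show ?thesis using ffun_step[OF s] by simp
qed

lemma comb_div: "(d::real) \<noteq> 0 \<Longrightarrow> (1 - u) * ((1 - a) / d) + u * ((1 - b) / d) = (1 - ((1 - u) * a + u * b)) / d"
  by (simp add: field_simps)

lemma kern_concave:
  assumes t: "0 \<le> t" "t \<le> 1" and u: "0 \<le> u" "u \<le> 1"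
  shows "(1 - u) * kern x t + u * kern y t \<le> kern ((1 - u) * x + u * y) t"
proof -
  consider "t = 1" | "t = 0" | "0 < t" "t < 1" using t by linarith
  then show ?thesis
  proof cases
    case 1 then show ?thesis by (simp add: kern_def)
  next
    case 2 then show ?thesis by (simp add: kern_def algebra_simps)
  next
    case 3
    define L where "L = ln t"
    have pw: "t powr r = exp (r * L)" for r using 3 by (simp add: powr_def L_def)
    have e: "exp (((1 - u) * x + u * y) * L) \<le> (1 - u) * exp (x * L) + u * exp (y * L)"
      using exp_convex_comb[OF u, of "x * L" "y * L"] by (simp add: algebra_simps)
    have d: "1 - t > 0" using 3 by simp
    have kk: "kern r t = (1 - exp (r * L)) / (1 - t)" for r using 3 by (simp add: kern_def pw)
    have "(1 - u) * kern x t + u * kern y t = (1 - ((1 - u) * exp (x * L) + u * exp (y * L))) / (1 - t)"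
      unfolding kk using d by (intro comb_div) simp
    also have "\<dots> \<le> (1 - exp (((1 - u) * x + u * y) * L)) / (1 - t)"
      using e d by (intro divide_right_mono) auto
    also have "\<dots> = kern ((1 - u) * x + u * y) t" using 3 by (simp add: kern_def pw)
    finally show ?thesis .
  qed
qed

lemma ffun_concave:
  assumes x: "x > 0" and y: "y > 0" and u: "0 \<le> u" "u \<le> 1"
  shows "(1 - u) * ffun M x + u * ffun M y \<le> ffun M ((1 - u) * x + u * y)"
proof -
  have p: "(1 - u) * x + u * y \<ge> 0" using x y u by (intro add_nonneg_nonneg mult_nonneg_nonneg) auto
  have "(1 - u) * ffun M x + u * ffun M y = (\<integral>t. (1 - u) * kern x t + u * kern y t \<partial>M)"
    unfolding ffun_def using int_kern[of x] int_kern[of y] x y by simp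
  also have "\<dots> \<le> (\<integral>t. kern ((1 - u) * x + u * y) t \<partial>M)"
  proof (rule integral_mono_AE)
    show "integrable M (\<lambda>t. (1 - u) * kern x t + u * kern y t)"
      using int_kern[of x] int_kern[of y] x y by simp
    show "integrable M (\<lambda>t. kern ((1 - u) * x + u * y) t)" using int_kern[OF p] by simp
    show "AE t in M. (1 - u) * kern x t + u * kern y t \<le> kern ((1 - u) * x + u * y) t"
      using AE01 by eventually_elim (use u in \<open>auto intro: kern_concave\<close>)
  qed
  finally show ?thesis by (simp add: ffun_def)
qed

lemma ffun_cvx: "convex_on {0<..} (\<lambda>s. ln (1 / ffun M s))"
proof (rule convex_onI)
  show "convex ({0<..} :: real set)" by (simp add: convex_real_interval)
  fix t x y :: real
  assume t: "0 < t" "t < 1" and x: "x \<in> {0<..}" and y: "y \<in> {0<..}"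
  have x0: "x > 0" and y0: "y > 0" using x y by auto
  have fx: "ffun M x > 0" and fy: "ffun M y > 0" using ffun_pos x0 y0 by auto
  have c: "(1 - t) * ffun M x + t * ffun M y \<le> ffun M ((1 - t) * x + t * y)"
    using ffun_concave[OF x0 y0, of t] t by simp
  have cpos: "(1 - t) * ffun M x + t * ffun M y > 0"
    using fx fy t by (intro add_pos_pos mult_pos_pos) auto
  have lnc: "(1 - t) * ln (ffun M x) + t * ln (ffun M y) \<le> ln ((1 - t) * ffun M x + t * ffun M y)"
  proof -
    have "exp ((1 - t) * ln (ffun M x) + t * ln (ffun M y)) \<le> (1 - t) * exp (ln (ffun M x)) + t * exp (ln (ffun M y))"
      using t by (intro exp_convex_comb) auto
    also have "\<dots> = (1 - t) * ffun M x + t * ffun M y" using fx fy by simp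
    finally show ?thesis using cpos by (simp add: ln_ge_iff)
  qed
  have pp: "(1 - t) *\<^sub>R x + t *\<^sub>R y = (1 - t) * x + t * y" by simp
  have "ln (1 / ffun M ((1 - t) * x + t * y)) = - ln (ffun M ((1 - t) * x + t * y))"
    using cpos c by (simp add: ln_div)
  also have "\<dots> \<le> - ln ((1 - t) * ffun M x + t * ffun M y)"
    using c cpos by simp
  also have "\<dots> \<le> - ((1 - t) * ln (ffun M x) + t * ln (ffun M y))" using lnc by simp
  also have "\<dots> = (1 - t) * ln (1 / ffun M x) + t * ln (1 / ffun M y)"
    using fx fy by (simp add: ln_div)
  finally show "ln (1 / ffun M ((1 - t) *\<^sub>R x + t *\<^sub>R y)) \<le> (1 - t) * ln (1 / ffun M x) + t * ln (1 / ffun M y)"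
    by (simp only: pp)
qed

end

theorem theorem1p2:
  fixes M :: "real measure"
  assumes "moment_measure M"
  shows "(\<forall>s>0. ffun M s > 0) \<and> ffun M 1 = 1 \<and>
         convex_on {0<..} (\<lambda>s. ln (1 / ffun M s)) \<and>
         (\<forall>s>0. ffun M s = ffun M (s + 1) - 1 / ffun M (s + 1)) \<and>
         (\<forall>g :: real \<Rightarrow> real.
            (\<forall>s>0. g s > 0) \<and> g 1 = 1 \<and>
            convex_on {0<..} (\<lambda>s. ln (1 / g s)) \<and>
            (\<forall>s>0. g s = g (s + 1) - 1 / g (s + 1))
            \<longrightarrow> (\<forall>s>0. g s = ffun M s) \<and>
                (\<forall>s\<in>{0<..1}. (\<lambda>n. (psi ^^ n) ((1 / mseq (n - 1)) * (mseq (n - 1) / mseq n) powr s))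
                                 \<longlonglongrightarrow> g s)) \<and>
         (\<forall>s\<in>{0<..1}. (\<lambda>n. (psi ^^ n) ((1 / mseq (n - 1)) * (mseq (n - 1) / mseq n) powr s))
                                 \<longlonglongrightarrow> ffun M s)"
proof -
  interpret mmeas M by unfold_locales (rule assms)
  have P1: "\<forall>s>0. ffun M s > 0" using ffun_pos by blast
  have P2: "ffun M 1 = 1" by (rule ffun_one)
  have P3: "convex_on {0<..} (\<lambda>s. ln (1 / ffun M s))" by (rule ffun_cvx)
  have P4: "\<forall>s>0. ffun M s = ffun M (s + 1) - 1 / ffun M (s + 1)" using ffun_rec by blast
  have gf: "good (ffun M)" unfolding good_def using P1 P2 P3 P4 by blast
  have P5: "\<forall>g :: real \<Rightarrow> real.
            (\<forall>s>0. g s > 0) \<and> g 1 = 1 \<and>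
            convex_on {0<..} (\<lambda>s. ln (1 / g s)) \<and>
            (\<forall>s>0. g s = g (s + 1) - 1 / g (s + 1))
            \<longrightarrow> (\<forall>s>0. g s = ffun M s) \<and>
                (\<forall>s\<in>{0<..1}. (\<lambda>n. (psi ^^ n) ((1 / mseq (n - 1)) * (mseq (n - 1) / mseq n) powr s))
                                 \<longlonglongrightarrow> g s)"
  proof (rule allI, rule impI)
    fix g :: "real \<Rightarrow> real"
    assume "(\<forall>s>0. g s > 0) \<and> g 1 = 1 \<and>
            convex_on {0<..} (\<lambda>s. ln (1 / g s)) \<and>
            (\<forall>s>0. g s = g (s + 1) - 1 / g (s + 1))"
    then have gg: "good g" unfolding good_def .
    have "\<forall>s>0. g s = ffun M s" using good_unique[OF gg gf] by blast
    moreover have "\<forall>s\<in>{0<..1}. (\<lambda>n. (psi ^^ n) ((1 / mseq (n - 1)) * (mseq (n - 1) / mseq n) powr s)) \<longlonglongrightarrow> g s"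
      using good_limit[OF gg] by blast
    ultimately show "(\<forall>s>0. g s = ffun M s) \<and>
                (\<forall>s\<in>{0<..1}. (\<lambda>n. (psi ^^ n) ((1 / mseq (n - 1)) * (mseq (n - 1) / mseq n) powr s))
                                 \<longlonglongrightarrow> g s)" by (rule conjI)
  qed
  have P6: "\<forall>s\<in>{0<..1}. (\<lambda>n. (psi ^^ n) ((1 / mseq (n - 1)) * (mseq (n - 1) / mseq n) powr s))
                                 \<longlonglongrightarrow> ffun M s"
    using good_limit[OF gf] by blast
  show ?thesis by (intro conjI P1 P2 P3 P4 P5 P6)
qed

end
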